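(* There is an absolute constant $C$ such that the following holds. Let $D$ be a positive integer that is not a perfect square and let $1\le j\le 2p$. Then there is a sequence $(\tilde Q_k,V_k)$, $k=0,1,\dots,K$, of reduced forms $\tilde Q_k$ of determinant $D$ and integer $2\times2$ matrices $V_k$ such that: (i) $\tilde Q_0=\tilde I$ and $V_0$ is the identity matrix; (ii) each pair $(\tilde Q_{k+1},V_{k+1})$ is obtained from earlier pairs by a transformation of one of two types. Type I: $\tilde Q_{k+1}$ is the right neighbor of $\tilde Q_k$, $\tilde Q_{k+1}=S_{k+1}^t\tilde Q_kS_{k+1}$, $V_{k+1}=V_kS_{k+1}$, and $\log\|S_{k+1}\|\le\frac12\log D$. Type II: $\tilde Q_{k+1}=\tilde Q_{k_1}\circ\tilde Q_{k_2}$ via a bilinear matrix $B_{k+1}$ for some $0\le k_1,k_2\le k$, $V_{k+1}B_{k+1}=B_0(V_{k_1}\otimes V_{k_2})$, and $\log\|B_{k+1}\|\le C\log D$; (iii) $\tilde Q_K=Q^{(j)}$ and $V_K=L_j$. Moreover the length satisfies $K\le C(\log D)^2$.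
   Context: Forms $[a,2b,c]$ mean $ax_1^2+2bx_1x_2+cx_2^2$ with matrix $\begin{pmatrix} a&b\\ b&c\end{pmatrix}$, determinant $b^2-ac$. Reduced form of determinant $D$: $0<b<\sqrt D$, $\sqrt D-b<|a|<\sqrt D+b$. $\tilde I=[1,2\lambda,\lambda^2-D]$ with $\lambda=\lfloor\sqrt D\rfloor$. The right neighbor of a reduced $Q_1=[a_1,2b_1,c_1]$ is $S^tQ_1S$ with $S=\begin{pmatrix}0&1\\-1&\mu\end{pmatrix}$, $\mu$ the integer with $-\sqrt D-b_1<\mu c_1<-\sqrt D-b_1+|c_1|$. Principal cycle: $Q^{(0)}=\tilde I$, $Q^{(j)}$ the right neighbor of $Q^{(j-1)}$, $S^{(j)}$ the corresponding matrix, $L_j=S^{(1)}\cdots S^{(j)}$; $2p$ is the least positive period of $(Q^{(j)})$. $B_0=\begin{pmatrix}1&0&0&D-\lambda^2\\0&1&1&2\lambda\end{pmatrix}$. Composition $Q_3=Q_1\circ Q_2$ via a $2\times4$ integer matrix $B$: $(x^tQ_1x)(y^tQ_2y)=z^tB^tQ_3Bz$ identically with $z=(x_1y_1,x_1y_2,x_2y_1,x_2y_2)^t$, $B$ unimodular (six $2\times2$ minors $\Delta_{ik}$, columns $i<k$, with gcd 1) and oriented ($a_1\Delta_{12}>0$, $a_2\Delta_{13}>0$, $a_i$ the leading coefficient of $Q_i$). $\otimes$ is the Kronecker product; $\|M\|$ is the maximal absolute value of the entries. Logarithms: $\log x=\log_2|x|$ if $|x|\ge4$, and $\log x=2$ if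 $|x|<4$. *)

theory Defs
  imports Complex_Main "Jordan_Normal_Form.Matrix"
begin

text \<open>A binary form [a,2b,c] is represented by the triple (a,b,c); its matrix is [[a,b],[b,c]].\<close>
type_synonym form = "int \<times> int \<times> int"

definition fmat :: "form \<Rightarrow> int mat" where
  "fmat Q = (case Q of (a,b,c) \<Rightarrow>
     mat 2 2 (\<lambda>(i,k). if i = 0 \<and> k = 0 then a else if i = 1 \<and> k = 1 then c else b))"

definition mat_form :: "int mat \<Rightarrow> form" where
  "mat_form M = (M $$ (0,0), M $$ (0,1), M $$ (1,1))"

definition lead :: "form \<Rightarrow> int" where "lead Q = fst Q"

definition fdet :: "form \<Rightarrow> int" where
  "fdet Q = (case Q of (a,b,c) \<Rightarrow> b^2 - a*c)"

definition reduced :: "int \<Rightarrow> form \<Rightarrow> bool" where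
  "reduced D Q = (case Q of (a,b,c) \<Rightarrow>
     fdet Q = D \<and> 0 < b \<and> real_of_int b < sqrt (real_of_int D) \<and>
     sqrt (real_of_int D) - b < \<bar>real_of_int a\<bar> \<and> \<bar>real_of_int a\<bar> < sqrt (real_of_int D) + b)"

definition lam :: "int \<Rightarrow> int" where "lam D = \<lfloor>sqrt (real_of_int D)\<rfloor>"

definition Itilde :: "int \<Rightarrow> form" where "Itilde D = (1, lam D, (lam D)^2 - D)"

definition rn_mu :: "int \<Rightarrow> form \<Rightarrow> int" where
  "rn_mu D Q = (case Q of (a,b,c) \<Rightarrow>
     THE \<mu>::int. - sqrt (real_of_int D) - b < real_of_int (\<mu> * c) \<and>
                 real_of_int (\<mu> * c) < - sqrt (real_of_int D) - b + \<bar>real_of_int c\<bar>)"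

definition rn_S :: "int \<Rightarrow> form \<Rightarrow> int mat" where
  "rn_S D Q = mat_of_rows_list 2 [[0, 1], [-1, rn_mu D Q]]"

definition right_nb :: "int \<Rightarrow> form \<Rightarrow> form" where
  "right_nb D Q = mat_form (transpose_mat (rn_S D Q) * fmat Q * rn_S D Q)"

definition cyc :: "int \<Rightarrow> nat \<Rightarrow> form" where
  "cyc D j = (right_nb D ^^ j) (Itilde D)"

fun Lmat :: "int \<Rightarrow> nat \<Rightarrow> int mat" where
  "Lmat D 0 = 1\<^sub>m 2"
| "Lmat D (Suc j) = Lmat D j * rn_S D (cyc D j)"

text \<open>The least positive period (= 2p) of the principal cycle.\<close>
definition cyc_period :: "int \<Rightarrow> nat" where
  "cyc_period D = (LEAST n. 0 < n \<and> (\<forall>i. cyc D (i + n) = cyc D i))"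

definition B0 :: "int \<Rightarrow> int mat" where
  "B0 D = mat_of_rows_list 4 [[1, 0, 0, D - (lam D)^2], [0, 1, 1, 2 * lam D]]"

definition kron :: "int mat \<Rightarrow> int mat \<Rightarrow> int mat" where
  "kron A B = mat (dim_row A * dim_row B) (dim_col A * dim_col B)
     (\<lambda>(i,k). A $$ (i div dim_row B, k div dim_col B) * B $$ (i mod dim_row B, k mod dim_col B))"

definition mnorm :: "int mat \<Rightarrow> int" where
  "mnorm M = Max {\<bar>M $$ (i,k)\<bar> | i k. i < dim_row M \<and> k < dim_col M}"

definition lg :: "real \<Rightarrow> real" where
  "lg x = (if \<bar>x\<bar> \<ge> 4 then log 2 \<bar>x\<bar> else 2)"

definition qf :: "form \<Rightarrow> int \<Rightarrow> int \<Rightarrow> int" where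
  "qf Q x1 x2 = (case Q of (a,b,c) \<Rightarrow> a*x1^2 + 2*b*x1*x2 + c*x2^2)"

definition minor2 :: "int mat \<Rightarrow> nat \<Rightarrow> nat \<Rightarrow> int" where
  "minor2 B i k = B $$ (0,i) * B $$ (1,k) - B $$ (0,k) * B $$ (1,i)"

definition composition_via :: "form \<Rightarrow> form \<Rightarrow> form \<Rightarrow> int mat \<Rightarrow> bool" where
  "composition_via Q1 Q2 Q3 B \<longleftrightarrow>
     B \<in> carrier_mat 2 4 \<and>
     (\<forall>x1 x2 y1 y2 :: int.
        qf Q1 x1 x2 * qf Q2 y1 y2 =
        (let z = vec_of_list [x1*y1, x1*y2, x2*y1, x2*y2]
         in z \<bullet> ((transpose_mat B * fmat Q3 * B) *\<^sub>v z))) \<and>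
     Gcd {minor2 B i k | i k. i < k \<and> k < 4} = 1 \<and>
     lead Q1 * minor2 B 0 1 > 0 \<and> lead Q2 * minor2 B 0 2 > 0"

end

theory Submission
  imports Defs
begin

definition m2 :: "int \<Rightarrow> int \<Rightarrow> int \<Rightarrow> int \<Rightarrow> int mat" where
  "m2 a b c d = mat 2 2 (\<lambda>(i,k). if i=0 then (if k=0 then a else b) else (if k=0 then c else d))"

lemma m2_carrier[simp]: "m2 a b c d \<in> carrier_mat 2 2"
  by (simp add: m2_def)
lemma m2_dims[simp]: "dim_row (m2 a b c d) = 2" "dim_col (m2 a b c d) = 2"
  by (simp_all add: m2_def)
lemma m2_idx[simp]: "m2 a b c d $$ (0,0) = a" "m2 a b c d $$ (0,1) = b" "m2 a b c d $$ (1,0) = c" "m2 a b c d $$ (1,1) = d"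
  "m2 a b c d $$ (0,Suc 0) = b" "m2 a b c d $$ (Suc 0,0) = c" "m2 a b c d $$ (Suc 0,Suc 0) = d"
  by (simp_all add: m2_def)

lemma sum2: "(\<Sum>i<2. f i) = f 0 + f (1::nat)" by (simp add: eval_nat_numeral)
lemma sum4: "(\<Sum>i<4. f i) = f 0 + f 1 + f 2 + f (3::nat)" by (simp add: eval_nat_numeral)
lemma less2: "(i::nat) < 2 \<longleftrightarrow> i = 0 \<or> i = 1" by auto
lemma less4: "(i::nat) < 4 \<longleftrightarrow> i = 0 \<or> i = 1 \<or> i = 2 \<or> i = 3" by auto

lemma mult_idx: "A \<in> carrier_mat n m \<Longrightarrow> B \<in> carrier_mat m p \<Longrightarrow> i < n \<Longrightarrow> k < p \<Longrightarrow>
  (A * B) $$ (i,k) = (\<Sum>l<m. A $$ (i,l) * B $$ (l,k))"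
  by (auto simp: scalar_prod_def atLeast0LessThan intro!: sum.cong)

lemma m2_eqI: "A \<in> carrier_mat 2 2 \<Longrightarrow> A $$ (0,0) = a \<Longrightarrow> A $$ (0,1) = b \<Longrightarrow> A $$ (1,0) = c \<Longrightarrow> A $$ (1,1) = d \<Longrightarrow> A = m2 a b c d"
  by (rule eq_matI) (auto simp: m2_def less2)

lemma m2_mult: "m2 a b c d * m2 e f g h = m2 (a*e+b*g) (a*f+b*h) (c*e+d*g) (c*f+d*h)"
  by (rule m2_eqI[OF mult_carrier_mat[OF m2_carrier m2_carrier]]) (simp_all del: index_mult_mat add: mult_idx[of _ 2 2 _ 2] sum2)

lemma m2_transpose: "transpose_mat (m2 a b c d) = m2 a c b d"
  by (rule m2_eqI) auto

lemma one_m2: "1\<^sub>m 2 = m2 1 0 0 1" by (rule m2_eqI) auto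

lemma fmat_m2: "fmat (a,b,c) = m2 a b b c"
  by (rule m2_eqI) (auto simp: fmat_def)

lemma mat_form_m2: "mat_form (m2 a b c d) = (a,b,d)" by (simp add: mat_form_def)

lemma rn_S_m2: "rn_S D Q = m2 0 1 (-1) (rn_mu D Q)"
  by (rule m2_eqI) (auto simp: rn_S_def mat_of_rows_list_def)

lemma sqrt_not_int:
  assumes "0 \<le> D" "\<not> (\<exists>n::int. D = n^2)"
  shows "sqrt (real_of_int D) \<noteq> real_of_int k"
proof
  assume h: "sqrt (real_of_int D) = real_of_int k"
  then have "real_of_int D = (real_of_int k)^2" using assms(1)
    by (metis of_int_0_le_iff real_sqrt_pow2)
  then have "D = k^2" by (metis of_int_eq_iff of_int_power)
  with assms(2) show False by blast
qed

lemma mu_ex1: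
  assumes c: "c \<noteq> 0" and y: "\<forall>k::int. y \<noteq> real_of_int k"
  shows "\<exists>!\<mu>::int. y < real_of_int (\<mu>*c) \<and> real_of_int (\<mu>*c) < y + \<bar>real_of_int c\<bar>"
proof (rule ex_ex1I)
  define ac where "ac = \<bar>real_of_int c\<bar>"
  have acpos: "ac > 0" using c by (simp add: ac_def)
  define \<nu> where "\<nu> = \<lfloor>y / ac\<rfloor> + 1"
  define \<mu> where "\<mu> = sgn c * \<nu>"
  have mc: "real_of_int (\<mu>*c) = real_of_int \<nu> * ac"
    using c by (auto simp: \<mu>_def ac_def sgn_if)
  have "real_of_int \<lfloor>y / ac\<rfloor> \<noteq> y / ac"
  proof
    assume h: "real_of_int \<lfloor>y / ac\<rfloor> = y / ac"
    have "y = (y/ac)*ac" using acpos by simp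
    also have "\<dots> = real_of_int \<lfloor>y / ac\<rfloor> * ac" by (simp only: h)
    finally have "y = real_of_int \<lfloor>y / ac\<rfloor> * ac" .
    then have "y = real_of_int (\<lfloor>y / ac\<rfloor> * \<bar>c\<bar>)" unfolding ac_def of_int_mult of_int_abs .
    with y show False by blast
  qed
  then have f1: "real_of_int \<lfloor>y / ac\<rfloor> < y / ac" by (meson floor_less_iff less_eq_real_def of_int_floor_le)
  have f2: "y / ac < real_of_int \<lfloor>y / ac\<rfloor> + 1" by linarith
  have "y < real_of_int \<nu> * ac" using f2 acpos unfolding \<nu>_def by (simp add: field_simps)
  moreover have "real_of_int \<nu> * ac < y + ac" using f1 acpos unfolding \<nu>_def by (simp add: field_simps)
  ultimately show "\<exists>\<mu>::int. y < real_of_int (\<mu>*c) \<and> real_of_int (\<mu>*c) < y + \<bar>real_of_int c\<bar>"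
    using mc by (intro exI[of _ \<mu>]) (simp add: ac_def)
next
  fix m1 m2 :: int
  assume h1: "y < real_of_int (m1*c) \<and> real_of_int (m1*c) < y + \<bar>real_of_int c\<bar>"
     and h2: "y < real_of_int (m2*c) \<and> real_of_int (m2*c) < y + \<bar>real_of_int c\<bar>"
  have "\<bar>real_of_int ((m1 - m2)*c)\<bar> < \<bar>real_of_int c\<bar>" using h1 h2 by (simp add: algebra_simps abs_less_iff)
  then have "real_of_int (\<bar>m1 - m2\<bar> * \<bar>c\<bar>) < real_of_int (1 * \<bar>c\<bar>)" by (simp add: abs_mult del: of_int_diff)
  then have "\<bar>m1 - m2\<bar> * \<bar>c\<bar> < 1 * \<bar>c\<bar>" by (simp only: of_int_less_iff)
  then have "\<bar>m1 - m2\<bar> < 1" using c by (meson mult_less_cancel_right_pos zero_less_abs_iff)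
  then show "m1 = m2" by simp
qed

locale DD =
  fixes D :: int
  assumes Dpos: "0 < D" and NS: "\<not> (\<exists>n::int. D = n^2)"
begin

definition s where "s = sqrt (real_of_int D)"

lemma s_pos: "s > 0" using Dpos by (simp add: s_def)
lemma s_sq: "s^2 = real_of_int D" using Dpos by (simp add: s_def)
lemma s_ss: "s*s = real_of_int D" using s_sq by (simp add: power2_eq_square)
lemma s_notint: "s \<noteq> real_of_int k" using sqrt_not_int[OF _ NS] Dpos by (simp add: s_def)

lemma mu_prop:
  assumes "c \<noteq> 0"
  shows "- s - b < real_of_int (rn_mu D (a,b,c) * c) \<and>
         real_of_int (rn_mu D (a,b,c) * c) < - s - b + \<bar>real_of_int c\<bar>"
proof -
  have y: "\<forall>k::int. - s - real_of_int b \<noteq> real_of_int k"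
  proof
    fix k show "- s - real_of_int b \<noteq> real_of_int k" using s_notint[of "- k - b"] by auto
  qed
  show ?thesis unfolding rn_mu_def prod.case s_def[symmetric]
    by (rule theI'[OF mu_ex1[OF assms y]])
qed

lemma right_nb_eq: "right_nb D (a,b,c) = (c, -b - rn_mu D (a,b,c) * c,
   a + 2*b*rn_mu D (a,b,c) + c * (rn_mu D (a,b,c))^2)"
  unfolding right_nb_def rn_S_m2 fmat_m2 m2_transpose m2_mult mat_form_m2
  by (simp add: algebra_simps power2_eq_square)

lemma fmat_right_nb: "fmat (right_nb D Q) = transpose_mat (rn_S D Q) * fmat Q * rn_S D Q"
proof -
  obtain a b c where Q: "Q = (a,b,c)" by (cases Q) auto
  show ?thesis unfolding Q right_nb_eq fmat_m2 rn_S_m2 m2_transpose m2_mult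
    by (simp add: algebra_simps power2_eq_square)
qed

lemma reduced_iff: "reduced D (a,b,c) \<longleftrightarrow> b^2 - a*c = D \<and> 0 < b \<and> real_of_int b < s \<and>
     s - b < \<bar>real_of_int a\<bar> \<and> \<bar>real_of_int a\<bar> < s + b"
  by (simp add: reduced_def fdet_def s_def)

lemma red_c:
  assumes "reduced D (a,b,c)"
  shows "s - b < \<bar>real_of_int c\<bar> \<and> \<bar>real_of_int c\<bar> < s + b" "a \<noteq> 0" "c \<noteq> 0"
proof -
  from assms have d: "b^2 - a*c = D" and b0: "0 < b" and bs: "real_of_int b < s"
    and a1: "s - b < \<bar>real_of_int a\<bar>" and a2: "\<bar>real_of_int a\<bar> < s + b"
    by (auto simp: reduced_iff)
  have prod: "\<bar>real_of_int a\<bar> * \<bar>real_of_int c\<bar> = (s - b) * (s + b)"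
  proof -
    have "real_of_int (a*c) = real_of_int b ^2 - s^2" using d s_sq by (metis of_int_diff of_int_power add_diff_cancel_left' diff_add_cancel)
    then have "real_of_int a * real_of_int c = - ((s - b) * (s + b))" by (simp add: algebra_simps power2_eq_square)
    moreover have "(s - b) * (s + b) > 0" using bs b0 by (simp add: mult_pos_pos)
    ultimately show ?thesis by (metis abs_minus_cancel abs_mult abs_of_pos)
  qed
  have sb: "s - b > 0" "s + b > 0" using bs b0 by auto
  show "a \<noteq> 0" using a1 sb by auto
  show c0: "c \<noteq> 0" using prod sb by (metis abs_zero mult_zero_right mult_pos_pos of_int_0 less_irrefl)
  have "s - b < \<bar>real_of_int c\<bar>"
  proof (rule ccontr)
    assume "\<not> ?thesis"
    then have "\<bar>real_of_int a\<bar> * \<bar>real_of_int c\<bar> \<le> \<bar>real_of_int a\<bar> * (s - b)" by (simp add: mult_left_mono)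
    also have "\<dots> < (s + b) * (s - b)" using a2 sb by (simp add: mult_strict_right_mono)
    finally show False using prod by (simp add: algebra_simps)
  qed
  moreover have "\<bar>real_of_int c\<bar> < s + b"
  proof (rule ccontr)
    assume "\<not> ?thesis"
    then have "\<bar>real_of_int a\<bar> * (s + b) \<le> \<bar>real_of_int a\<bar> * \<bar>real_of_int c\<bar>" by (simp add: mult_left_mono)
    moreover have "(s - b) * (s + b) < \<bar>real_of_int a\<bar> * (s + b)" using a1 sb by (simp add: mult_strict_right_mono)
    ultimately show False using prod by simp
  qed
  ultimately show "s - b < \<bar>real_of_int c\<bar> \<and> \<bar>real_of_int c\<bar> < s + b" by simp
qed

lemma interval_unique:
  fixes x y c :: int and lo :: real
  assumes "c \<noteq> 0" "c dvd (x - y)" "lo < x" "x < lo + \<bar>c\<bar>" "lo < y" "y < lo + \<bar>c\<bar>"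
  shows "x = y"
proof -
  obtain k where k: "x - y = c * k" using assms(2) by blast
  have "\<bar>real_of_int (x - y)\<bar> < \<bar>real_of_int c\<bar>" using assms(3-6) by (simp add: abs_less_iff)
  then have "real_of_int (\<bar>c\<bar> * \<bar>k\<bar>) < real_of_int (\<bar>c\<bar> * 1)" using k by (simp add: abs_mult del: of_int_diff)
  then have "\<bar>c\<bar> * \<bar>k\<bar> < \<bar>c\<bar> * 1" by (simp only: of_int_less_iff)
  then have "\<bar>k\<bar> < 1" using assms(1) by (simp add: mult_less_cancel_left_pos)
  then show ?thesis using k by simp
qed

lemma right_nb_reduced:
  assumes "reduced D Q"
  shows "reduced D (right_nb D Q)"
proof -
  obtain a b c where Q: "Q = (a,b,c)" by (cases Q) auto
  note r = assms[unfolded Q]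
  from r have d: "b^2 - a*c = D" and b0: "0 < b" and bs: "real_of_int b < s"
    by (auto simp: reduced_iff)
  note cc = red_c[OF r]
  define \<mu> where "\<mu> = rn_mu D (a,b,c)"
  have mp: "- s - b < real_of_int (\<mu> * c) \<and> real_of_int (\<mu> * c) < - s - b + \<bar>real_of_int c\<bar>"
    using mu_prop[OF cc(3)] by (simp add: \<mu>_def)
  define b' where "b' = -b - \<mu>*c"
  have b'1: "s - \<bar>real_of_int c\<bar> < b'" "b' < s" using mp by (auto simp: b'_def)
  have det: "b'^2 - c*(a + 2*b*\<mu> + c*\<mu>^2) = D" using d by (simp add: b'_def algebra_simps power2_eq_square)
  have pos: "0 < b' \<and> \<bar>real_of_int c\<bar> < s + b'"
  proof (cases "\<bar>real_of_int c\<bar> \<le> s")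
    case True then show ?thesis using b'1 s_pos by linarith
  next
    case False
    have "b' = \<bar>c\<bar> - b"
    proof (rule interval_unique[OF cc(3), of _ _ "s - \<bar>real_of_int c\<bar>"])
      show "c dvd b' - (\<bar>c\<bar> - b)" by (simp add: b'_def abs_if)
      show "s - \<bar>real_of_int c\<bar> < real_of_int (\<bar>c\<bar> - b)" using False bs by simp
      show "real_of_int (\<bar>c\<bar> - b) < s - \<bar>real_of_int c\<bar> + \<bar>c\<bar>" using cc(1) by simp
    qed (use b'1 in auto)
    then show ?thesis using False bs by auto
  qed
  show ?thesis unfolding Q right_nb_eq \<mu>_def[symmetric] b'_def[symmetric] reduced_iff
    using det b'1 pos by auto
qed

lemma right_nb_inj:
  assumes "reduced D Q" "reduced D Q'" "right_nb D Q = right_nb D Q'"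
  shows "Q = Q'"
proof -
  obtain a b c where Q: "Q = (a,b,c)" by (cases Q) auto
  obtain a' b' c' where Q': "Q' = (a',b',c')" by (cases Q') auto
  note r = assms(1)[unfolded Q] and r' = assms(2)[unfolded Q']
  have e: "c = c'" "-b - rn_mu D (a,b,c) * c = -b' - rn_mu D (a',b',c') * c'"
    using assms(3) unfolding Q Q' right_nb_eq by auto
  have "b = b'"
  proof (rule interval_unique[OF red_c(3)[OF r], of _ _ "s - \<bar>real_of_int c\<bar>"])
    have "b - b' = (rn_mu D (a',b',c') - rn_mu D (a,b,c)) * c" using e by (simp add: algebra_simps)
    then show "c dvd b - b'" by simp
  qed (use red_c(1)[OF r] red_c(1)[OF r'] e r r' in \<open>auto simp: reduced_iff\<close>)
  moreover have "a = a'"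
  proof -
    have "a*c = a'*c" using r r' e \<open>b = b'\<close> by (auto simp: reduced_iff)
    then show ?thesis using red_c(3)[OF r] by simp
  qed
  ultimately show ?thesis using Q Q' e by simp
qed

end

context DD begin


lemma lam_props: "1 \<le> lam D" "real_of_int (lam D) < s" "s - lam D < 1" "real_of_int (lam D) \<le> s"
proof -
  have s1: "s \<ge> 1" using Dpos by (simp add: s_def)
  show le: "real_of_int (lam D) \<le> s" by (simp add: lam_def s_def)
  show "real_of_int (lam D) < s" using le s_notint[of "lam D"] by linarith
  show "s - lam D < 1" by (simp add: lam_def s_def) linarith
  show "1 \<le> lam D" using s1 by (simp add: lam_def s_def)
qed

lemma lam_sq: "(lam D)^2 \<le> D"
proof -
  have "real_of_int (lam D) ^2 \<le> s^2" using lam_props(1,4) by (intro power_mono) auto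
  then show ?thesis using s_sq by (metis of_int_le_iff of_int_power)
qed

lemma Itilde_reduced: "reduced D (Itilde D)"
  using lam_props s_pos unfolding Itilde_def reduced_iff by (auto simp: algebra_simps)

lemma cyc_Suc: "cyc D (Suc k) = right_nb D (cyc D k)" by (simp add: cyc_def)
lemma cyc_0: "cyc D 0 = Itilde D" by (simp add: cyc_def)

lemma cyc_reduced: "reduced D (cyc D k)"
  by (induction k) (auto simp: cyc_0 cyc_Suc Itilde_reduced right_nb_reduced)

definition P1 where "P1 k = Lmat D k $$ (0,0)"
definition P2 where "P2 k = Lmat D k $$ (0,1)"
definition Q1 where "Q1 k = Lmat D k $$ (1,0)"
definition Q2 where "Q2 k = Lmat D k $$ (1,1)"
definition mu where "mu k = rn_mu D (cyc D k)"

lemma Lmat_carrier: "Lmat D k \<in> carrier_mat 2 2"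
proof (induction k)
  case 0 then show ?case by simp
next
  case (Suc k) then show ?case by (simp add: rn_S_m2)
qed

lemma Lmat_m2: "Lmat D k = m2 (P1 k) (P2 k) (Q1 k) (Q2 k)"
  using Lmat_carrier by (intro m2_eqI) (auto simp: P1_def P2_def Q1_def Q2_def)

lemma PQ_0: "P1 0 = 1" "P2 0 = 0" "Q1 0 = 0" "Q2 0 = 1"
  by (simp_all add: P1_def P2_def Q1_def Q2_def one_m2)

lemma PQ_Suc: "P1 (Suc k) = - P2 k" "P2 (Suc k) = P1 k + mu k * P2 k"
   "Q1 (Suc k) = - Q2 k" "Q2 (Suc k) = Q1 k + mu k * Q2 k"
proof -
  have "Lmat D (Suc k) = m2 (- P2 k) (P1 k + P2 k * mu k) (- Q2 k) (Q1 k + Q2 k * mu k)"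
    by (simp add: Lmat_m2[of k] rn_S_m2 m2_mult mu_def)
  then show "P1 (Suc k) = - P2 k" "P2 (Suc k) = P1 k + mu k * P2 k"
   "Q1 (Suc k) = - Q2 k" "Q2 (Suc k) = Q1 k + mu k * Q2 k"
    by (simp_all add: P1_def P2_def Q1_def Q2_def algebra_simps)
qed

definition nI :: "int \<Rightarrow> int \<Rightarrow> int" where "nI p q = (p + lam D * q)^2 - D * q^2"
definition bil :: "int \<Rightarrow> int \<Rightarrow> int \<Rightarrow> int \<Rightarrow> int" where
  "bil p1 q1 p2 q2 = (p1 + lam D * q1) * (p2 + lam D * q2) - D * q1 * q2"

lemma cyc_L: "cyc D k = (nI (P1 k) (Q1 k), bil (P1 k) (Q1 k) (P2 k) (Q2 k), nI (P2 k) (Q2 k))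
   \<and> P1 k * Q2 k - P2 k * Q1 k = 1"
proof (induction k)
  case 0 then show ?case by (simp add: cyc_0 PQ_0 Itilde_def nI_def bil_def)
next
  case (Suc k)
  then have e: "cyc D k = (nI (P1 k) (Q1 k), bil (P1 k) (Q1 k) (P2 k) (Q2 k), nI (P2 k) (Q2 k))"
    and d: "P1 k * Q2 k - P2 k * Q1 k = 1" by auto
  have m: "rn_mu D (nI (P1 k) (Q1 k), bil (P1 k) (Q1 k) (P2 k) (Q2 k), nI (P2 k) (Q2 k)) = mu k"
    by (simp add: mu_def e)
  have t: "cyc D (Suc k) = (nI (P1 (Suc k)) (Q1 (Suc k)), bil (P1 (Suc k)) (Q1 (Suc k)) (P2 (Suc k)) (Q2 (Suc k)), nI (P2 (Suc k)) (Q2 (Suc k)))"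
    unfolding cyc_Suc e right_nb_eq m PQ_Suc
    by (simp add: nI_def bil_def algebra_simps power2_eq_square)
  have "P1 (Suc k) * Q2 (Suc k) - P2 (Suc k) * Q1 (Suc k) = P1 k * Q2 k - P2 k * Q1 k"
    unfolding PQ_Suc by (simp add: algebra_simps)
  then show ?case using t d by simp
qed

lemma cyc_inj: "cyc D (Suc x) = cyc D (Suc y) \<Longrightarrow> cyc D x = cyc D y"
  using right_nb_inj[OF cyc_reduced cyc_reduced] by (simp add: cyc_Suc)

lemma reduced_in:
  assumes "reduced D (a,b,c)"
  shows "(a,b,c) \<in> (\<lambda>(a,b). (a,b,(b^2 - D) div a)) ` ({-(2*lam D+1)..2*lam D+1} \<times> {1..lam D})"
proof -
  from assms have d: "b^2 - a*c = D" and b0: "0 < b" and bs: "real_of_int b < s"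
    and a2: "\<bar>real_of_int a\<bar> < s + b" by (auto simp: reduced_iff)
  have a0: "a \<noteq> 0" using red_c[OF assms] by simp
  have bl: "b \<le> lam D" using bs unfolding lam_def s_def by (simp add: le_floor_iff)
  have "\<bar>real_of_int a\<bar> < 2*s" using a2 bs by simp
  moreover have "s < lam D + 1" using lam_props by simp
  ultimately have "\<bar>real_of_int a\<bar> < real_of_int (2 * lam D + 2)" by simp
  then have "\<bar>a\<bar> < 2 * lam D + 2" by (simp only: of_int_abs of_int_less_iff)
  then have ar: "a \<in> {-(2*lam D+1)..2*lam D+1}" by auto
  have "c = (b^2 - D) div a" using d a0 by (metis add_diff_cancel_left' diff_add_cancel nonzero_mult_div_cancel_left)
  then show ?thesis using ar bl b0 by (intro image_eqI[of _ _ "(a,b)"]) auto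
qed

lemma period_bound: "cyc_period D \<le> 7 * nat D"
proof -
  define F where "F = (\<lambda>(a,b). (a,b,(b^2 - D) div a)) ` ({-(2*lam D+1)..2*lam D+1} \<times> {1..lam D})"
  have finF: "finite F" by (simp add: F_def)
  have "card F \<le> card ({-(2*lam D+1)..2*lam D+1} \<times> {1..lam D})" unfolding F_def by (rule card_image_le) simp
  also have "\<dots> = nat (3 + 4 * lam D) * nat (lam D)" by (simp add: card_cartesian_product)
  also have "\<dots> = nat ((3 + 4 * lam D) * lam D)" using lam_props(1) by (intro nat_mult_distrib[symmetric]) simp
  also have "\<dots> = nat ((4 * lam D + 3) * lam D)" by (simp only: add.commute[of 3])
  also have "\<dots> \<le> nat (7 * D)"
  proof -
    have "lam D * 1 \<le> lam D * lam D" using lam_props(1) by (intro mult_left_mono) auto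
    then have "(4 * lam D + 3) * lam D \<le> 7 * (lam D)^2" unfolding power2_eq_square distrib_right by linarith
    also have "\<dots> \<le> 7 * D" using lam_sq by simp
    finally show ?thesis by simp
  qed
  also have "nat (7 * D) = 7 * nat D" by (simp add: nat_mult_distrib)
  finally have cF: "card F \<le> 7 * nat D" .
  have sub: "cyc D ` {0..7 * nat D} \<subseteq> F"
  proof
    fix x assume "x \<in> cyc D ` {0..7 * nat D}"
    then obtain k where xk: "x = cyc D k" by auto
    obtain a b c where abc: "cyc D k = (a,b,c)" by (cases "cyc D k") auto
    have "reduced D (a,b,c)" using cyc_reduced[of k] abc by simp
    then have "(a,b,c) \<in> F" unfolding F_def by (rule reduced_in)
    then show "x \<in> F" using xk abc by simp
  qed
  have "\<not> inj_on (cyc D) {0..7 * nat D}"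
  proof
    assume "inj_on (cyc D) {0..7 * nat D}"
    then have "card (cyc D ` {0..7 * nat D}) = 7 * nat D + 1" by (simp add: card_image)
    moreover have "card (cyc D ` {0..7 * nat D}) \<le> card F" using sub finF by (rule card_mono[rotated])
    ultimately show False using cF by simp
  qed
  then obtain i i' where ii: "i \<in> {0..7 * nat D}" "i' \<in> {0..7 * nat D}" "i \<noteq> i'" "cyc D i = cyc D i'"
    unfolding inj_on_def by blast
  have down: "\<And>x y. x \<le> y \<Longrightarrow> cyc D x = cyc D y \<Longrightarrow> cyc D 0 = cyc D (y - x)"
  proof -
    fix x y :: nat
    show "x \<le> y \<Longrightarrow> cyc D x = cyc D y \<Longrightarrow> cyc D 0 = cyc D (y - x)"
    proof (induction x arbitrary: y)
      case 0 then show ?case by simp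
    next
      case (Suc x)
      obtain y' where y: "y = Suc y'" using Suc.prems(1) by (cases y) auto
      have c1: "cyc D x = cyc D y'" using cyc_inj[of x y'] Suc.prems(2) y by simp
      have c2: "x \<le> y'" using Suc.prems(1) y by simp
      have "cyc D 0 = cyc D (y' - x)" by (rule Suc.IH[OF c2 c1])
      then show ?case using y by simp
    qed
  qed
  obtain n where n: "0 < n" "n \<le> 7 * nat D" "cyc D n = cyc D 0"
  proof (cases "i < i'")
    case True then show ?thesis using that[of "i' - i"] down[of i i'] ii by auto
  next
    case False then show ?thesis using that[of "i - i'"] down[of i' i] ii by auto
  qed
  have per: "\<forall>k. cyc D (k + n) = cyc D k"
  proof
    fix k
    have "cyc D (k + n) = (right_nb D ^^ k) (cyc D n)" by (simp add: cyc_def funpow_add)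
    also have "\<dots> = cyc D k" using n(3) by (simp add: cyc_def funpow_add cyc_0)
    finally show "cyc D (k + n) = cyc D k" .
  qed
  have "cyc_period D \<le> n" unfolding cyc_period_def by (rule Least_le) (use n per in auto)
  then show ?thesis using n by simp
qed

end

lemma key_bound:
  fixes r Fn Fn1 Fm Fm1 fu pu fv pv X Y :: real
  assumes r: "r \<ge> 1" and pos: "Fn > 0" "Fm > 0"
   and b: "\<bar>fu\<bar> \<le> Fn1" "\<bar>pu\<bar> \<le> r/Fn" "\<bar>fv\<bar> \<le> Fn1" "\<bar>pv\<bar> \<le> r/Fn" "\<bar>X\<bar> \<le> Fm1" "\<bar>Y\<bar> \<le> r/Fm"
   and H1: "Fn1^2 \<le> r^3 * Fm" and H2: "Fm1 \<le> r^3 * Fn^2"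
  shows "\<bar>fu*fv*Y\<bar> + \<bar>pu*pv*X\<bar> \<le> r^4 + r^5"
proof -
  have Fn1: "Fn1 \<ge> 0" using b(1) by linarith
  have "\<bar>fu*fv*Y\<bar> = \<bar>fu\<bar>*\<bar>fv\<bar>*\<bar>Y\<bar>" by (simp add: abs_mult)
  also have "\<dots> \<le> Fn1*Fn1*(r/Fm)" using b Fn1 by (intro mult_mono) auto
  also have "\<dots> = Fn1^2 * r / Fm" by (simp add: power2_eq_square)
  also have "\<dots> \<le> r^3 * Fm * r / Fm" using H1 pos r by (intro divide_right_mono mult_right_mono) auto
  also have "\<dots> = r^4" using pos by (simp add: power_numeral_reduce field_simps)
  finally have 1: "\<bar>fu*fv*Y\<bar> \<le> r^4" .
  have "\<bar>pu*pv*X\<bar> = \<bar>pu\<bar>*\<bar>pv\<bar>*\<bar>X\<bar>" by (simp add: abs_mult)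
  also have "\<dots> \<le> (r/Fn)*(r/Fn)*Fm1" using b pos r by (intro mult_mono) auto
  also have "\<dots> = r^2 * Fm1 / Fn^2" by (simp add: power2_eq_square)
  also have "\<dots> \<le> r^2 * (r^3 * Fn^2) / Fn^2" using H2 pos r by (intro divide_right_mono mult_left_mono) auto
  also have "\<dots> = r^5" using pos by (simp add: power_numeral_reduce field_simps)
  finally have 2: "\<bar>pu*pv*X\<bar> \<le> r^5" .
  show ?thesis using 1 2 by simp
qed

context DD begin

definition om where "om = real_of_int (lam D) + s"
definition om' where "om' = real_of_int (lam D) - s"
definition phi where "phi p q = real_of_int p + om * real_of_int q"
definition psi where "psi p q = real_of_int p + om' * real_of_int q"

lemma nI_real: "real_of_int (nI p q) = phi p q * psi p q"
proof -
  have "phi p q * psi p q = (real_of_int p + real_of_int (lam D) * real_of_int q)^2 - s^2 * (real_of_int q)^2"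
    by (simp add: phi_def psi_def om_def om'_def power2_eq_square algebra_simps)
  then show ?thesis by (simp add: s_sq nI_def)
qed

lemma bil_real: "2 * real_of_int (bil p1 q1 p2 q2) = phi p1 q1 * psi p2 q2 + psi p1 q1 * phi p2 q2"
proof -
  have "phi p1 q1 * psi p2 q2 + psi p1 q1 * phi p2 q2 =
     2 * ((real_of_int p1 + real_of_int (lam D) * real_of_int q1) * (real_of_int p2 + real_of_int (lam D) * real_of_int q2)
        - s^2 * real_of_int q1 * real_of_int q2)"
    by (simp add: phi_def psi_def om_def om'_def power2_eq_square algebra_simps)
  then show ?thesis by (simp add: s_sq bil_def)
qed

lemma det_real: "phi p1 q1 * psi p2 q2 - psi p1 q1 * phi p2 q2 = - 2 * s * real_of_int (p1*q2 - p2*q1)"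
  by (simp add: phi_def psi_def om_def om'_def algebra_simps)

definition pr1 :: "int \<Rightarrow> int \<Rightarrow> int \<Rightarrow> int \<Rightarrow> int" where
  "pr1 u1 u2 v1 v2 = u1*v1 + (D - (lam D)^2)*u2*v2"
definition pr2 :: "int \<Rightarrow> int \<Rightarrow> int \<Rightarrow> int \<Rightarrow> int" where
  "pr2 u1 u2 v1 v2 = u1*v2 + u2*v1 + 2*lam D*u2*v2"

lemma om2: "om*om = 2*lam D*om + D - (lam D)^2" "om'*om' = 2*lam D*om' + D - (lam D)^2"
proof -
  have "om*om = 2*lam D*om + s*s - (lam D)^2" "om'*om' = 2*lam D*om' + s*s - (lam D)^2"
    by (simp_all add: om_def om'_def power2_eq_square algebra_simps)
  then show "om*om = 2*lam D*om + D - (lam D)^2" "om'*om' = 2*lam D*om' + D - (lam D)^2"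
    by (simp_all add: s_ss)
qed

lemma phi_pr: "phi (pr1 u1 u2 v1 v2) (pr2 u1 u2 v1 v2) = phi u1 u2 * phi v1 v2"
proof -
  have "phi u1 u2 * phi v1 v2 = u1*v1 + om*(u1*v2+u2*v1) + (om*om)*u2*v2"
    by (simp add: phi_def algebra_simps)
  also have "\<dots> = phi (pr1 u1 u2 v1 v2) (pr2 u1 u2 v1 v2)"
    unfolding om2 by (simp add: phi_def pr1_def pr2_def algebra_simps)
  finally show ?thesis by simp
qed

lemma psi_pr: "psi (pr1 u1 u2 v1 v2) (pr2 u1 u2 v1 v2) = psi u1 u2 * psi v1 v2"
proof -
  have "psi u1 u2 * psi v1 v2 = u1*v1 + om'*(u1*v2+u2*v1) + (om'*om')*u2*v2"
    by (simp add: psi_def algebra_simps)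
  also have "\<dots> = psi (pr1 u1 u2 v1 v2) (pr2 u1 u2 v1 v2)"
    unfolding om2 by (simp add: psi_def pr1_def pr2_def algebra_simps)
  finally show ?thesis by simp
qed

abbreviation "Af k \<equiv> phi (P1 k) (Q1 k)"
abbreviation "Ap k \<equiv> psi (P1 k) (Q1 k)"
abbreviation "Bf k \<equiv> phi (P2 k) (Q2 k)"
abbreviation "Bp k \<equiv> psi (P2 k) (Q2 k)"

definition ca where "ca k = fst (cyc D k)"
definition cb where "cb k = fst (snd (cyc D k))"
definition cc where "cc k = snd (snd (cyc D k))"

lemma cyc_abc: "cyc D k = (ca k, cb k, cc k)" by (simp add: ca_def cb_def cc_def)

lemma cyc_facts: "Af k * Ap k = ca k" "Bf k * Bp k = cc k" "Af k * Bp k = cb k - s" "Ap k * Bf k = cb k + s"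
proof -
  have e: "ca k = nI (P1 k) (Q1 k)" "cb k = bil (P1 k) (Q1 k) (P2 k) (Q2 k)" "cc k = nI (P2 k) (Q2 k)"
    using cyc_L[of k] by (auto simp: ca_def cb_def cc_def)
  have d: "P1 k * Q2 k - P2 k * Q1 k = 1" using cyc_L[of k] by auto
  show "Af k * Ap k = ca k" "Bf k * Bp k = cc k" using e nI_real by auto
  have 1: "Af k * Bp k + Ap k * Bf k = 2 * cb k" using e bil_real by simp
  have d': "real_of_int (P1 k * Q2 k - P2 k * Q1 k) = 1" using d by simp
  have 2: "Af k * Bp k - Ap k * Bf k = - 2 * s" using det_real[of "P1 k" "Q1 k" "P2 k" "Q2 k"] unfolding d' by simp
  show "Af k * Bp k = cb k - s" "Ap k * Bf k = cb k + s" using 1 2 by linarith+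
qed

lemma red_k: "0 < cb k" "real_of_int (cb k) < s" "s - cb k < \<bar>real_of_int (ca k)\<bar>" "\<bar>real_of_int (ca k)\<bar> < s + cb k"
  "ca k \<noteq> 0"
  using cyc_reduced[of k] red_c(2)[of "ca k" "cb k" "cc k"] unfolding cyc_abc reduced_iff by auto

definition Phi where "Phi k = \<bar>Af k\<bar>"

definition r where "r = 2 * s"

lemma s_ge1: "s \<ge> 1" using Dpos by (simp add: s_def)

lemma Phi_pos: "Phi k > 0"
  using cyc_facts(1)[of k] red_k(5)[of k] unfolding Phi_def by auto

lemma Bf_abs: "\<bar>real_of_int (ca k)\<bar> * \<bar>Bf k\<bar> = Phi k * (s + cb k)"
proof -
  have "real_of_int (ca k) * Bf k = Af k * (cb k + s)" using cyc_facts(1,4)[of k] by (metis mult.assoc)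
  then have "\<bar>real_of_int (ca k)\<bar> * \<bar>Bf k\<bar> = \<bar>Af k\<bar> * \<bar>cb k + s\<bar>" by (metis abs_mult)
  then show ?thesis using red_k(1)[of k] s_pos unfolding Phi_def by (simp add: add.commute)
qed

lemma Bp_abs: "\<bar>real_of_int (ca k)\<bar> * \<bar>Bp k\<bar> = \<bar>Ap k\<bar> * (s - cb k)"
proof -
  have "real_of_int (ca k) * Bp k = Ap k * (cb k - s)" using cyc_facts(1,3)[of k]
    by (metis mult.assoc mult.commute)
  then have "\<bar>real_of_int (ca k)\<bar> * \<bar>Bp k\<bar> = \<bar>Ap k\<bar> * \<bar>cb k - s\<bar>" by (metis abs_mult)
  then show ?thesis using red_k(2)[of k] by simp
qed

lemma Phi_Suc: "Phi (Suc k) = \<bar>Bf k\<bar>"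
  unfolding Phi_def PQ_Suc by (simp add: phi_def algebra_simps abs_minus_commute)

lemma Phi_grow: "Phi k < Phi (Suc k)" "Phi (Suc k) \<le> r * Phi k"
proof -
  have a1: "\<bar>real_of_int (ca k)\<bar> \<ge> 1" using red_k(5)[of k] by (simp add: int_one_le_iff_zero_less flip: of_int_abs)
  have ap: "\<bar>real_of_int (ca k)\<bar> > 0" using a1 by simp
  have e: "\<bar>Bf k\<bar> = Phi k * (s + cb k) / \<bar>real_of_int (ca k)\<bar>" using Bf_abs[of k] ap by (simp add: field_simps)
  have "Phi k * \<bar>real_of_int (ca k)\<bar> < Phi k * (s + cb k)" using red_k(4)[of k] Phi_pos[of k] by simp
  then show "Phi k < Phi (Suc k)" unfolding Phi_Suc e using ap by (simp add: field_simps)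
  have pp: "Phi k * (s + cb k) > 0" using Phi_pos[of k] red_k(1)[of k] s_pos by simp
  have "Phi k * (s + cb k) \<le> Phi k * (s + cb k) * \<bar>real_of_int (ca k)\<bar>"
    using a1 pp by (simp add: mult_le_cancel_left1)
  moreover have "Phi k * (s + cb k) \<le> r * Phi k" using red_k(2)[of k] Phi_pos[of k]
    by (simp add: r_def mult.commute mult_left_mono)
  moreover have "r * Phi k * 1 \<le> r * Phi k * \<bar>real_of_int (ca k)\<bar>"
    using a1 Phi_pos[of k] s_pos by (intro mult_left_mono) (auto simp: r_def)
  ultimately have "Phi k * (s + cb k) \<le> r * Phi k * \<bar>real_of_int (ca k)\<bar>" by simp
  then show "Phi (Suc k) \<le> r * Phi k" unfolding Phi_Suc e using ap by (simp add: field_simps)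
qed

lemma Ap_bound: "\<bar>Ap k\<bar> < r / Phi k"
proof -
  have "Phi k * \<bar>Ap k\<bar> = \<bar>real_of_int (ca k)\<bar>" using cyc_facts(1)[of k] unfolding Phi_def by (metis abs_mult)
  also have "\<dots> < r" using red_k(4)[of k] red_k(2)[of k] by (simp add: r_def)
  finally show ?thesis using Phi_pos[of k] by (simp add: field_simps)
qed

lemma Bp_le: "\<bar>Bp k\<bar> \<le> \<bar>Ap k\<bar>"
proof -
  have "\<bar>real_of_int (ca k)\<bar> * \<bar>Bp k\<bar> \<le> \<bar>real_of_int (ca k)\<bar> * \<bar>Ap k\<bar>"
    unfolding Bp_abs using red_k(3)[of k] by (metis abs_ge_zero less_imp_le mult.commute mult_right_mono)
  then show ?thesis using red_k(5)[of k] by simp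
qed

lemma Phi_0: "Phi 0 = 1" by (simp add: Phi_def PQ_0 phi_def)

lemma Phi_1: "Phi 1 \<ge> 2"
proof -
  have "cyc D 0 = (1, lam D, (lam D)^2 - D)" by (simp add: cyc_0 Itilde_def)
  then have "ca 0 = 1" "cb 0 = lam D" by (simp_all add: ca_def cb_def)
  then have "Phi 1 = s + lam D" using Bf_abs[of 0] Phi_Suc[of 0] Phi_0 by simp
  then show ?thesis using s_ge1 lam_props(1) by simp
qed

lemma col_bounds:
  "\<bar>phi (P1 n) (Q1 n)\<bar> \<le> Phi (Suc n)" "\<bar>psi (P1 n) (Q1 n)\<bar> \<le> r / Phi n"
  "\<bar>phi (P2 n) (Q2 n)\<bar> \<le> Phi (Suc n)" "\<bar>psi (P2 n) (Q2 n)\<bar> \<le> r / Phi n"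
  using Phi_grow(1)[of n] Ap_bound[of n] Bp_le[of n] Phi_Suc[of n] unfolding Phi_def by auto

lemma coord0: "2 * s * \<bar>real_of_int (Q2 m * w1 - P2 m * w2)\<bar> = \<bar>phi w1 w2 * Bp m - psi w1 w2 * Bf m\<bar>"
proof -
  have e: "phi w1 w2 * Bp m - psi w1 w2 * Bf m = - (2 * s) * real_of_int (Q2 m * w1 - P2 m * w2)"
    using det_real[of w1 w2 "P2 m" "Q2 m"] by (simp add: algebra_simps)
  have "\<bar>phi w1 w2 * Bp m - psi w1 w2 * Bf m\<bar> = \<bar>2 * s\<bar> * \<bar>real_of_int (Q2 m * w1 - P2 m * w2)\<bar>"
    unfolding e abs_mult using s_pos by simp
  then show ?thesis using s_pos by simp
qed

lemma coord1: "2 * s * \<bar>real_of_int (- Q1 m * w1 + P1 m * w2)\<bar> = \<bar>psi w1 w2 * Af m - phi w1 w2 * Ap m\<bar>"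
proof -
  have e: "psi w1 w2 * Af m - phi w1 w2 * Ap m = - (2 * s) * real_of_int (- Q1 m * w1 + P1 m * w2)"
    using det_real[of "P1 m" "Q1 m" w1 w2] by (simp add: algebra_simps)
  have "\<bar>psi w1 w2 * Af m - phi w1 w2 * Ap m\<bar> = \<bar>2 * s\<bar> * \<bar>real_of_int (- Q1 m * w1 + P1 m * w2)\<bar>"
    unfolding e abs_mult using s_pos by simp
  then show ?thesis using s_pos by simp
qed

lemma entry_bound:
  assumes u: "\<bar>phi u1 u2\<bar> \<le> Phi (Suc n)" "\<bar>psi u1 u2\<bar> \<le> r / Phi n"
      and v: "\<bar>phi v1 v2\<bar> \<le> Phi (Suc n)" "\<bar>psi v1 v2\<bar> \<le> r / Phi n"
      and H1: "(Phi (Suc n))^2 \<le> r^3 * Phi m" and H2: "Phi (Suc m) \<le> r^3 * (Phi n)^2"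
    shows "\<bar>real_of_int (Q2 m * pr1 u1 u2 v1 v2 - P2 m * pr2 u1 u2 v1 v2)\<bar> \<le> 64 * (real_of_int D)^3"
      and "\<bar>real_of_int (- Q1 m * pr1 u1 u2 v1 v2 + P1 m * pr2 u1 u2 v1 v2)\<bar> \<le> 64 * (real_of_int D)^3"
proof -
  have r1: "r \<ge> 1" using s_ge1 by (simp add: r_def)
  have fin: "r^4 + r^5 \<le> 64 * (real_of_int D)^3"
  proof -
    have e4: "r^4 = 16 * (real_of_int D)^2" by (simp add: r_def power_mult_distrib power_numeral_reduce s_ss[symmetric]; (simp add: algebra_simps)?)
    have e5: "r^5 = 32 * ((real_of_int D)^2 * s)" by (simp add: r_def power_mult_distrib power_numeral_reduce s_ss[symmetric]; (simp add: algebra_simps)?)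
    have sD: "s \<le> D"
    proof -
      have "s * 1 \<le> s * s" using s_ge1 s_pos by (intro mult_left_mono) auto
      then show ?thesis using s_ss by simp
    qed
    have D1: "(D::real) \<ge> 1" using Dpos by simp
    have i1: "(real_of_int D)^2 * s \<le> (real_of_int D)^2 * D" using sD by (intro mult_left_mono) auto
    have i2: "(real_of_int D)^2 * 1 \<le> (real_of_int D)^2 * D" using D1 by (intro mult_left_mono) auto
    have i3: "(real_of_int D)^2 * D = real_of_int D ^3" by (simp add: power2_eq_square power3_eq_cube)
    have "r^4 \<le> 16 * (real_of_int D)^3" using e4 i2 i3 by simp
    moreover have "r^5 \<le> 32 * (real_of_int D)^3" using e5 i1 i3 by simp
    moreover have "real_of_int D ^3 \<ge> 0" using Dpos by simp
    ultimately show ?thesis by linarith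
  qed
  have Pm: "\<bar>Af m\<bar> \<le> Phi (Suc m)" "\<bar>Bf m\<bar> \<le> Phi (Suc m)" "\<bar>Ap m\<bar> \<le> r / Phi m" "\<bar>Bp m\<bar> \<le> r / Phi m"
    using col_bounds[of m] by auto
  have kb1: "\<bar>phi u1 u2 * phi v1 v2 * Bp m\<bar> + \<bar>psi u1 u2 * psi v1 v2 * Bf m\<bar> \<le> r^4 + r^5"
    by (rule key_bound[OF r1 Phi_pos Phi_pos u(1) u(2) v(1) v(2) Pm(2) Pm(4) H1 H2])
  have kb2: "\<bar>phi u1 u2 * phi v1 v2 * Ap m\<bar> + \<bar>psi u1 u2 * psi v1 v2 * Af m\<bar> \<le> r^4 + r^5"
    by (rule key_bound[OF r1 Phi_pos Phi_pos u(1) u(2) v(1) v(2) Pm(1) Pm(3) H1 H2])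
  have s2: "2 * s \<ge> 1" using s_ge1 by simp
  have gen: "\<And>c X. 2 * s * \<bar>c\<bar> = \<bar>X\<bar> \<Longrightarrow> \<bar>X\<bar> \<le> r^4 + r^5 \<Longrightarrow> \<bar>c\<bar> \<le> 64 * (real_of_int D)^3"
  proof -
    fix c X :: real assume a: "2 * s * \<bar>c\<bar> = \<bar>X\<bar>" "\<bar>X\<bar> \<le> r^4 + r^5"
    have "\<bar>c\<bar> \<le> 2 * s * \<bar>c\<bar>" using s2 by (simp add: mult_le_cancel_right1)
    then show "\<bar>c\<bar> \<le> 64 * (real_of_int D)^3" using a fin by linarith
  qed
  show "\<bar>real_of_int (Q2 m * pr1 u1 u2 v1 v2 - P2 m * pr2 u1 u2 v1 v2)\<bar> \<le> 64 * (real_of_int D)^3"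
  proof (rule gen[OF coord0])
    show "\<bar>phi (pr1 u1 u2 v1 v2) (pr2 u1 u2 v1 v2) * Bp m - psi (pr1 u1 u2 v1 v2) (pr2 u1 u2 v1 v2) * Bf m\<bar> \<le> r^4 + r^5"
      unfolding phi_pr psi_pr by (rule order.trans[OF abs_triangle_ineq4 kb1])
  qed
  show "\<bar>real_of_int (- Q1 m * pr1 u1 u2 v1 v2 + P1 m * pr2 u1 u2 v1 v2)\<bar> \<le> 64 * (real_of_int D)^3"
  proof (rule gen[OF coord1])
    show "\<bar>psi (pr1 u1 u2 v1 v2) (pr2 u1 u2 v1 v2) * Af m - phi (pr1 u1 u2 v1 v2) (pr2 u1 u2 v1 v2) * Ap m\<bar> \<le> r^4 + r^5"
      unfolding phi_pr psi_pr using kb2 abs_triangle_ineq4[of "psi u1 u2 * psi v1 v2 * Af m" "phi u1 u2 * phi v1 v2 * Ap m"] by linarith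
  qed
qed

end

lemma B0_carrier: "B0 D \<in> carrier_mat 2 4" unfolding B0_def mat_of_rows_list_def carrier_mat_def by simp
lemma B0_idx: "B0 D $$ (0,0) = 1" "B0 D $$ (0,1) = 0" "B0 D $$ (0,2) = 0" "B0 D $$ (0,3) = D - (lam D)^2"
  "B0 D $$ (1,0) = 0" "B0 D $$ (1,1) = 1" "B0 D $$ (1,2) = 1" "B0 D $$ (1,3) = 2 * lam D"
  "B0 D $$ (0,Suc 0) = 0" "B0 D $$ (Suc 0,0) = 0" "B0 D $$ (Suc 0,Suc 0) = 1" "B0 D $$ (Suc 0,2) = 1" "B0 D $$ (Suc 0,3) = 2 * lam D"
  by (simp_all add: B0_def mat_of_rows_list_def)

lemma kron_carrier: "A \<in> carrier_mat 2 2 \<Longrightarrow> B \<in> carrier_mat 2 2 \<Longrightarrow> kron A B \<in> carrier_mat 4 4"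
  unfolding kron_def carrier_mat_def by auto

lemma kron_idx: "A \<in> carrier_mat 2 2 \<Longrightarrow> B \<in> carrier_mat 2 2 \<Longrightarrow> l < 4 \<Longrightarrow> k < 4 \<Longrightarrow>
  kron A B $$ (l,k) = A $$ (l div 2, k div 2) * B $$ (l mod 2, k mod 2)"
  unfolding kron_def carrier_mat_def by auto

context DD begin

definition colP where "colP n a = (if a = (0::nat) then P1 n else P2 n)"
definition colQ where "colQ n a = (if a = (0::nat) then Q1 n else Q2 n)"

lemma Lmat_idx: "a < 2 \<Longrightarrow> Lmat D n $$ (0,a) = colP n a" "a < 2 \<Longrightarrow> Lmat D n $$ (1,a) = colQ n a"
   "a < 2 \<Longrightarrow> Lmat D n $$ (Suc 0,a) = colQ n a"
  by (auto simp: Lmat_m2 colP_def colQ_def less2)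

definition XB where "XB n = B0 D * kron (Lmat D n) (Lmat D n)"

lemma XB_carrier: "XB n \<in> carrier_mat 2 4"
  unfolding XB_def using B0_carrier kron_carrier[OF Lmat_carrier Lmat_carrier] by (rule mult_carrier_mat)

lemma XB_idx:
  assumes "k < 4"
  shows "XB n $$ (0,k) = pr1 (colP n (k div 2)) (colQ n (k div 2)) (colP n (k mod 2)) (colQ n (k mod 2))"
    "XB n $$ (1,k) = pr2 (colP n (k div 2)) (colQ n (k div 2)) (colP n (k mod 2)) (colQ n (k mod 2))"
proof -
  have kc: "kron (Lmat D n) (Lmat D n) \<in> carrier_mat 4 4" using kron_carrier[OF Lmat_carrier Lmat_carrier] .
  have e: "\<And>i. i < 2 \<Longrightarrow> XB n $$ (i,k) = (\<Sum>l<4. B0 D $$ (i,l) * (Lmat D n $$ (l div 2, k div 2) * Lmat D n $$ (l mod 2, k mod 2)))"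
    unfolding XB_def using assms
    by (simp del: index_mult_mat add: mult_idx[OF B0_carrier kc] kron_idx[OF Lmat_carrier Lmat_carrier])
  have kd: "k div 2 < 2" "k mod 2 < 2" using assms by auto
  show "XB n $$ (0,k) = pr1 (colP n (k div 2)) (colQ n (k div 2)) (colP n (k mod 2)) (colQ n (k mod 2))"
    using e[of 0] by (simp add: sum4 B0_idx Lmat_idx[OF kd(1)] Lmat_idx[OF kd(2)] pr1_def algebra_simps)
  show "XB n $$ (1,k) = pr2 (colP n (k div 2)) (colQ n (k div 2)) (colP n (k mod 2)) (colQ n (k mod 2))"
    using e[of 1] by (simp add: sum4 B0_idx Lmat_idx[OF kd(1)] Lmat_idx[OF kd(2)] pr2_def algebra_simps)
qed

definition adjL where "adjL m = m2 (Q2 m) (- P2 m) (- Q1 m) (P1 m)"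
definition Bm where "Bm n m = adjL m * XB n"

lemma Bm_carrier: "Bm n m \<in> carrier_mat 2 4"
  unfolding Bm_def adjL_def using m2_carrier XB_carrier by (rule mult_carrier_mat)

lemma Bm_idx:
  assumes "k < 4"
  shows "Bm n m $$ (0,k) = Q2 m * XB n $$ (0,k) - P2 m * XB n $$ (1,k)"
    "Bm n m $$ (1,k) = - Q1 m * XB n $$ (0,k) + P1 m * XB n $$ (1,k)"
  using assms unfolding Bm_def adjL_def
  by (simp_all del: index_mult_mat add: mult_idx[OF m2_carrier XB_carrier] sum2)

lemma det_m: "P1 m * Q2 m - P2 m * Q1 m = 1" using cyc_L[of m] by simp

lemma Lmat_adj: "Lmat D m * adjL m = 1\<^sub>m 2"
  unfolding Lmat_m2 adjL_def m2_mult one_m2 using det_m[of m]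
  by (simp add: algebra_simps)

lemma Bm_V: "Lmat D m * Bm n m = B0 D * kron (Lmat D n) (Lmat D n)"
proof -
  have ac: "adjL m \<in> carrier_mat 2 2" by (simp add: adjL_def)
  have "Lmat D m * Bm n m = (Lmat D m * adjL m) * XB n"
    unfolding Bm_def by (rule assoc_mult_mat[symmetric, OF Lmat_carrier ac XB_carrier])
  also have "\<dots> = XB n" unfolding Lmat_adj using XB_carrier[of n] by simp
  finally show ?thesis by (simp add: XB_def)
qed

end

lemma gcd_one_lemma:
  fixes S :: "int set"
  assumes "x \<in> S" "y \<in> S" "w \<in> S" "\<alpha>*x + \<beta>*y + \<gamma>*w = 1"
  shows "Gcd S = 1"
proof -
  have "Gcd S dvd \<alpha>*x + \<beta>*y + \<gamma>*w" using assms(1-3) by (intro dvd_add dvd_mult Gcd_dvd)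
  then have "Gcd S dvd 1" using assms(4) by simp
  then show ?thesis using Gcd_int_greater_eq_0[of S] zdvd1_eq by auto
qed

lemma sq_pos: "(x::int) \<noteq> 0 \<Longrightarrow> x * x > 0" by (cases "x > 0") (auto simp: mult_neg_neg)

lemma mnorm_le:
  assumes "B \<in> carrier_mat 2 4" "\<And>i k. i < 2 \<Longrightarrow> k < 4 \<Longrightarrow> \<bar>B $$ (i,k)\<bar> \<le> M"
  shows "mnorm B \<le> M" "0 \<le> mnorm B"
proof -
  have e: "{\<bar>B $$ (i,k)\<bar> | i k. i < dim_row B \<and> k < dim_col B} = (\<lambda>(i,k). \<bar>B $$ (i,k)\<bar>) ` ({..<2} \<times> {..<4})"
    using assms(1) by auto
  have fin: "finite ((\<lambda>(i,k). \<bar>B $$ (i,k)\<bar>) ` ({..<2::nat} \<times> {..<4::nat}))" by simp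
  have "(\<lambda>(i,k). \<bar>B $$ (i,k)\<bar>) (0,0) \<in> (\<lambda>(i,k). \<bar>B $$ (i,k)\<bar>) ` ({..<2::nat} \<times> {..<4::nat})"
    by (intro imageI) simp
  then have ne: "(\<lambda>(i,k). \<bar>B $$ (i,k)\<bar>) ` ({..<2::nat} \<times> {..<4::nat}) \<noteq> {}" by blast
  show "mnorm B \<le> M" unfolding mnorm_def e using assms(2) by (subst Max_le_iff[OF fin ne]) auto
  have "\<bar>B $$ (0,0)\<bar> \<le> mnorm B" unfolding mnorm_def e by (rule Max_ge[OF fin]) force
  then show "0 \<le> mnorm B" by linarith
qed

lemma quad_eval:
  fixes B :: "int mat"
  assumes B: "B \<in> carrier_mat 2 4" and z: "z \<in> carrier_vec 4"
  shows "z \<bullet> ((transpose_mat B * fmat (f,g,h) * B) *\<^sub>v z) =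
     f * ((B *\<^sub>v z) $ 0)^2 + 2 * g * ((B *\<^sub>v z) $ 0) * ((B *\<^sub>v z) $ 1) + h * ((B *\<^sub>v z) $ 1)^2"
proof -
  define u where "u = B *\<^sub>v z"
  have u: "u \<in> carrier_vec 2" using B z by (simp add: u_def)
  have F: "fmat (f,g,h) \<in> carrier_mat 2 2" by (simp add: fmat_m2)
  have T: "transpose_mat B \<in> carrier_mat 4 2" using B by simp
  have "(transpose_mat B * fmat (f,g,h) * B) *\<^sub>v z = transpose_mat B *\<^sub>v (fmat (f,g,h) *\<^sub>v u)"
    using B z F T unfolding u_def
    by (metis assoc_mult_mat_vec mult_carrier_mat mult_mat_vec_carrier)
  then have "z \<bullet> ((transpose_mat B * fmat (f,g,h) * B) *\<^sub>v z) = (transpose_mat B *\<^sub>v (fmat (f,g,h) *\<^sub>v u)) \<bullet> z"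
    using comm_scalar_prod[OF z] T F u by (metis mult_mat_vec_carrier)
  also have "\<dots> = (fmat (f,g,h) *\<^sub>v u) \<bullet> u"
    unfolding u_def by (rule transpose_vec_mult_scalar[OF B z]) (use F u u_def in auto)
  also have "\<dots> = f * (u $ 0)^2 + 2 * g * (u $ 0) * (u $ 1) + h * (u $ 1)^2"
    using u unfolding fmat_m2
    by (simp add: scalar_prod_def sum2 atLeast0LessThan m2_def power2_eq_square algebra_simps
       mult_mat_vec_def)
  finally show ?thesis by (simp add: u_def)
qed

context DD begin


lemma formeval: "nI (p1*x1 + p2*x2) (q1*x1 + q2*x2) = nI p1 q1 * x1^2 + 2 * bil p1 q1 p2 q2 * x1 * x2 + nI p2 q2 * x2^2"
  by (simp add: nI_def bil_def power2_eq_square algebra_simps)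

lemma nI_pr: "nI (pr1 u1 u2 v1 v2) (pr2 u1 u2 v1 v2) = nI u1 u2 * nI v1 v2"
  by (simp add: nI_def pr1_def pr2_def power2_eq_square algebra_simps)

lemma pr_sym: "pr1 u1 u2 v1 v2 = pr1 v1 v2 u1 u2" "pr2 u1 u2 v1 v2 = pr2 v1 v2 u1 u2"
  by (simp_all add: pr1_def pr2_def algebra_simps)

end

context DD begin
lemma m2_mult_vec: "w \<in> carrier_vec 2 \<Longrightarrow> (m2 a b c d *\<^sub>v w) $ 0 = a * w $ 0 + b * w $ 1 \<and> (m2 a b c d *\<^sub>v w) $ 1 = c * w $ 0 + d * w $ 1"
  by (auto simp: scalar_prod_def atLeast0LessThan sum2 m2_def)

lemma XB_idx1: "k < 4 \<Longrightarrow> XB n $$ (Suc 0,k) = pr2 (colP n (k div 2)) (colQ n (k div 2)) (colP n (k mod 2)) (colQ n (k mod 2))"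
  using XB_idx(2)[of k n] by simp

lemma XB_vec:
  fixes x1 x2 y1 y2 :: int
  defines "z \<equiv> vec_of_list [x1*y1, x1*y2, x2*y1, x2*y2]"
  shows "(XB n *\<^sub>v z) $ 0 = pr1 (P1 n * x1 + P2 n * x2) (Q1 n * x1 + Q2 n * x2) (P1 n * y1 + P2 n * y2) (Q1 n * y1 + Q2 n * y2)"
    "(XB n *\<^sub>v z) $ 1 = pr2 (P1 n * x1 + P2 n * x2) (Q1 n * x1 + Q2 n * x2) (P1 n * y1 + P2 n * y2) (Q1 n * y1 + Q2 n * y2)"
proof -
  have d: "dim_row (XB n) = 2" "dim_col (XB n) = 4" using XB_carrier by auto
  have row: "\<And>i. i < 2 \<Longrightarrow> (XB n *\<^sub>v z) $ i = XB n $$ (i,0) * z $ 0 + XB n $$ (i,1) * z $ 1 + XB n $$ (i,2) * z $ 2 + XB n $$ (i,3) * z $ 3"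
    using d by (simp add: scalar_prod_def atLeast0LessThan sum4 z_def eval_nat_numeral del: vec_of_list_Cons)
  have zz: "z $ 0 = x1*y1" "z $ 1 = x1*y2" "z $ 2 = x2*y1" "z $ 3 = x2*y2" "z $ Suc 0 = x1*y2"
    unfolding z_def vec_of_list_index by simp_all
  show "(XB n *\<^sub>v z) $ 0 = pr1 (P1 n * x1 + P2 n * x2) (Q1 n * x1 + Q2 n * x2) (P1 n * y1 + P2 n * y2) (Q1 n * y1 + Q2 n * y2)"
    by (simp add: row sum4 XB_idx zz colP_def colQ_def pr1_def algebra_simps)
  show "(XB n *\<^sub>v z) $ 1 = pr2 (P1 n * x1 + P2 n * x2) (Q1 n * x1 + Q2 n * x2) (P1 n * y1 + P2 n * y2) (Q1 n * y1 + Q2 n * y2)"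
    by (simp add: row sum4 XB_idx XB_idx1 zz colP_def colQ_def pr2_def algebra_simps)
qed

lemma Bm_vec:
  assumes "z \<in> carrier_vec 4"
  shows "(Bm n m *\<^sub>v z) $ 0 = Q2 m * (XB n *\<^sub>v z) $ 0 - P2 m * (XB n *\<^sub>v z) $ 1"
        "(Bm n m *\<^sub>v z) $ 1 = - Q1 m * (XB n *\<^sub>v z) $ 0 + P1 m * (XB n *\<^sub>v z) $ 1"
proof -
  have ac: "adjL m \<in> carrier_mat 2 2" by (simp add: adjL_def)
  have e: "Bm n m *\<^sub>v z = adjL m *\<^sub>v (XB n *\<^sub>v z)" unfolding Bm_def
    by (rule assoc_mult_mat_vec[OF ac XB_carrier assms])
  have w: "XB n *\<^sub>v z \<in> carrier_vec 2" by (rule mult_mat_vec_carrier[OF XB_carrier assms])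
  show "(Bm n m *\<^sub>v z) $ 0 = Q2 m * (XB n *\<^sub>v z) $ 0 - P2 m * (XB n *\<^sub>v z) $ 1"
    "(Bm n m *\<^sub>v z) $ 1 = - Q1 m * (XB n *\<^sub>v z) $ 0 + P1 m * (XB n *\<^sub>v z) $ 1"
    unfolding e adjL_def using m2_mult_vec[OF w] by simp_all
qed

lemma qf_cyc: "qf (cyc D n) x1 x2 = nI (P1 n * x1 + P2 n * x2) (Q1 n * x1 + Q2 n * x2)"
  using cyc_L[of n] by (simp add: qf_def formeval)

lemma comp_identity:
  "qf (cyc D n) x1 x2 * qf (cyc D n) y1 y2 =
   (let z = vec_of_list [x1*y1, x1*y2, x2*y1, x2*y2]
    in z \<bullet> ((transpose_mat (Bm n m) * fmat (cyc D m) * Bm n m) *\<^sub>v z))"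
proof -
  define z where "z = vec_of_list [x1*y1, x1*y2, x2*y1, x2*y2]"
  have zc: "z \<in> carrier_vec 4" by (rule carrier_vecI) (simp add: z_def)
  define W0 where "W0 = (XB n *\<^sub>v z) $ 0"
  define W1 where "W1 = (XB n *\<^sub>v z) $ 1"
  define u0 where "u0 = Q2 m * W0 - P2 m * W1"
  define u1 where "u1 = - Q1 m * W0 + P1 m * W1"
  have L1: "P1 m * u0 + P2 m * u1 = W0"
  proof -
    have "P1 m * u0 + P2 m * u1 = (P1 m * Q2 m - P2 m * Q1 m) * W0" by (simp add: u0_def u1_def algebra_simps)
    then show ?thesis using det_m[of m] by simp
  qed
  have L2: "Q1 m * u0 + Q2 m * u1 = W1"
  proof -
    have "Q1 m * u0 + Q2 m * u1 = (P1 m * Q2 m - P2 m * Q1 m) * W1" by (simp add: u0_def u1_def algebra_simps)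
    then show ?thesis using det_m[of m] by simp
  qed
  have "qf (cyc D n) x1 x2 * qf (cyc D n) y1 y2 = nI W0 W1"
    unfolding qf_cyc W0_def W1_def z_def XB_vec nI_pr ..
  also have "\<dots> = nI (P1 m * u0 + P2 m * u1) (Q1 m * u0 + Q2 m * u1)" by (simp add: L1 L2)
  also have "\<dots> = fst (cyc D m) * u0^2 + 2 * fst (snd (cyc D m)) * u0 * u1 + snd (snd (cyc D m)) * u1^2"
    unfolding formeval using cyc_L[of m] by simp
  also have "\<dots> = z \<bullet> ((transpose_mat (Bm n m) * fmat (cyc D m) * Bm n m) *\<^sub>v z)"
  proof -
    obtain f g h where fgh: "cyc D m = (f,g,h)" by (cases "cyc D m") auto
    show ?thesis unfolding fgh quad_eval[OF Bm_carrier zc] Bm_vec[OF zc] u0_def u1_def W0_def W1_def by simp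
  qed
  finally have "qf (cyc D n) x1 x2 * qf (cyc D n) y1 y2 = z \<bullet> ((transpose_mat (Bm n m) * fmat (cyc D m) * Bm n m) *\<^sub>v z)" .
  then show ?thesis by (simp only: Let_def z_def)
qed

lemma minor_Bm: "i < 4 \<Longrightarrow> k < 4 \<Longrightarrow> minor2 (Bm n m) i k = minor2 (XB n) i k"
proof -
  assume a: "i < 4" "k < 4"
  have "minor2 (Bm n m) i k = (P1 m * Q2 m - P2 m * Q1 m) * minor2 (XB n) i k"
    unfolding minor2_def Bm_idx[OF a(1)] Bm_idx[OF a(2)] by (simp add: algebra_simps)
  then show ?thesis using det_m[of m] by simp
qed

lemma minors_XB:
  "minor2 (XB n) 0 1 = ca n" "minor2 (XB n) 0 2 = ca n" "minor2 (XB n) 0 3 = 2 * cb n" "minor2 (XB n) 1 3 = cc n"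
proof -
  have e: "ca n = nI (P1 n) (Q1 n)" "cb n = bil (P1 n) (Q1 n) (P2 n) (Q2 n)" "cc n = nI (P2 n) (Q2 n)"
    using cyc_L[of n] by (auto simp: ca_def cb_def cc_def)
  have d: "P1 n * Q2 n = 1 + P2 n * Q1 n" using det_m[of n] by simp
  have m01: "minor2 (XB n) 0 1 = nI (P1 n) (Q1 n) * (P1 n * Q2 n - P2 n * Q1 n)"
    unfolding minor2_def by (simp add: XB_idx XB_idx1 colP_def colQ_def pr1_def pr2_def nI_def power2_eq_square algebra_simps)
  have m02: "minor2 (XB n) 0 2 = nI (P1 n) (Q1 n) * (P1 n * Q2 n - P2 n * Q1 n)"
    unfolding minor2_def by (simp add: XB_idx XB_idx1 colP_def colQ_def pr1_def pr2_def nI_def power2_eq_square algebra_simps)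
  have m03: "minor2 (XB n) 0 3 = 2 * bil (P1 n) (Q1 n) (P2 n) (Q2 n) * (P1 n * Q2 n - P2 n * Q1 n)"
    unfolding minor2_def by (simp add: XB_idx XB_idx1 colP_def colQ_def pr1_def pr2_def bil_def power2_eq_square algebra_simps)
  have m13: "minor2 (XB n) 1 3 = nI (P2 n) (Q2 n) * (P1 n * Q2 n - P2 n * Q1 n)"
    unfolding minor2_def by (simp add: XB_idx XB_idx1 colP_def colQ_def pr1_def pr2_def nI_def power2_eq_square algebra_simps)
  show "minor2 (XB n) 0 1 = ca n" "minor2 (XB n) 0 2 = ca n" "minor2 (XB n) 0 3 = 2 * cb n" "minor2 (XB n) 1 3 = cc n"
    using m01 m02 m03 m13 e det_m[of n] by simp_all
qed

lemma Bm_gcd: "Gcd {minor2 (Bm n m) i k | i k. i < k \<and> k < 4} = 1"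
proof (rule gcd_one_lemma)
  have "minor2 (Bm n m) 0 1 = ca n" using minors_XB(1) minor_Bm[of 0 1] by simp
  then show "ca n \<in> {minor2 (Bm n m) i k | i k. i < k \<and> k < 4}"
    unfolding mem_Collect_eq by (intro exI[of _ "0::nat"] exI[of _ "1::nat"]) simp
  have "minor2 (Bm n m) 0 3 = 2 * cb n" using minors_XB(3) minor_Bm[of 0 3] by simp
  then show "2 * cb n \<in> {minor2 (Bm n m) i k | i k. i < k \<and> k < 4}"
    unfolding mem_Collect_eq by (intro exI[of _ "0::nat"] exI[of _ "3::nat"]) simp
  have "minor2 (Bm n m) 1 3 = cc n" using minors_XB(4) minor_Bm[of 1 3] by simp
  then show "cc n \<in> {minor2 (Bm n m) i k | i k. i < k \<and> k < 4}"
    unfolding mem_Collect_eq by (intro exI[of _ "1::nat"] exI[of _ "3::nat"]) simp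
  have e: "ca n = nI (P1 n) (Q1 n)" "cb n = bil (P1 n) (Q1 n) (P2 n) (Q2 n)" "cc n = nI (P2 n) (Q2 n)"
    using cyc_L[of n] by (auto simp: ca_def cb_def cc_def)
  have "nI (P1 n * Q2 n + P2 n * (- Q1 n)) (Q1 n * Q2 n + Q2 n * (- Q1 n)) = 1"
    using det_m[of n] by (simp add: nI_def)
  then show "(Q2 n)^2 * ca n + (- Q1 n * Q2 n) * (2 * cb n) + (Q1 n)^2 * cc n = 1"
    unfolding formeval e by (simp add: power2_eq_square algebra_simps)
qed

lemma Bm_orient: "lead (cyc D n) * minor2 (Bm n n') 0 1 > 0" "lead (cyc D n) * minor2 (Bm n n') 0 2 > 0"
  using minor_Bm[of 0 1] minor_Bm[of 0 2] minors_XB sq_pos[OF red_k(5)[of n]]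
  by (simp_all add: lead_def cyc_abc)

end

lemma lg_ge2: "lg x \<ge> 2"
proof (cases "\<bar>x\<bar> \<ge> 4")
  case True
  then have "log 2 4 \<le> log 2 \<bar>x\<bar>" by (subst log_le_cancel_iff) auto
  moreover have "log 2 (4::real) = 2"
    by (metis log2_of_power_eq numeral_Bit0_eq_double numeral_code(2) of_nat_numeral power2_eq_square power_numeral_even)
  ultimately show ?thesis using True by (simp add: lg_def)
qed (simp add: lg_def)

lemma lg_ge_log: "\<bar>x\<bar> \<ge> 1 \<Longrightarrow> log 2 \<bar>x\<bar> \<le> lg x"
proof (cases "\<bar>x\<bar> \<ge> 4")
  case False
  assume x: "\<bar>x\<bar> \<ge> 1"
  have "log 2 \<bar>x\<bar> \<le> log 2 4" using False x by (subst log_le_cancel_iff) auto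
  moreover have "log 2 (4::real) = 2"
    by (metis log2_of_power_eq numeral_Bit0_eq_double numeral_code(2) of_nat_numeral power2_eq_square power_numeral_even)
  ultimately show ?thesis using False by (simp add: lg_def)
qed (simp add: lg_def)

lemma lg_le_log: "\<bar>x\<bar> \<le> Y \<Longrightarrow> Y \<ge> 4 \<Longrightarrow> lg x \<le> log 2 Y"
proof (cases "\<bar>x\<bar> \<ge> 4")
  case True
  assume "\<bar>x\<bar> \<le> Y" "Y \<ge> 4"
  then show ?thesis using True by (simp add: lg_def)
next
  case False
  assume "\<bar>x\<bar> \<le> Y" "Y \<ge> 4"
  then have "log 2 4 \<le> log 2 Y" by (subst log_le_cancel_iff) auto
  moreover have "log 2 (4::real) = 2"
    by (metis log2_of_power_eq numeral_Bit0_eq_double numeral_code(2) of_nat_numeral power2_eq_square power_numeral_even)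
  ultimately show ?thesis using False by (simp add: lg_def)
qed

context DD begin

definition dl where "dl k = ln (Phi k)"

lemma dl_0: "dl 0 = 0" by (simp add: dl_def Phi_0)
lemma dl_Suc: "dl k < dl (Suc k)" "dl (Suc k) \<le> dl k + ln r"
proof -
  show "dl k < dl (Suc k)" unfolding dl_def using Phi_grow(1) Phi_pos by simp
  have "r > 0" using s_pos by (simp add: r_def)
  then have "ln (Phi (Suc k)) \<le> ln (r * Phi k)" using Phi_grow(2) Phi_pos by (subst ln_le_cancel_iff) auto
  moreover have "Phi k \<noteq> 0" using Phi_pos[of k] by simp
  ultimately show "dl (Suc k) \<le> dl k + ln r" unfolding dl_def using \<open>r > 0\<close> Phi_pos[of k] by (simp add: ln_mult)
qed

lemma dl_mono: "a < b \<Longrightarrow> dl a < dl b"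
  using dl_Suc(1) by (rule lift_Suc_mono_less)

lemma dl_mono_le: "a \<le> b \<Longrightarrow> dl a \<le> dl b"
  using dl_mono by (cases "a = b") (auto simp: less_le)

lemma dl_1: "dl 1 \<ge> ln 2" unfolding dl_def using Phi_1 by (subst ln_le_cancel_iff) auto

lemma dl_le: "dl k \<le> real k * ln r"
proof (induction k)
  case 0 then show ?case by (simp add: dl_0)
next
  case (Suc k) then show ?case using dl_Suc(2)[of k] by (simp add: algebra_simps)
qed

definition sel where "sel j y = (GREATEST m. m \<le> j \<and> dl m \<le> y)"

lemma sel_props:
  assumes "0 \<le> y" "y \<le> dl j"
  shows "sel j y \<le> j" "dl (sel j y) \<le> y" "y < dl (Suc (sel j y))"
proof -
  have ex: "0 \<le> j \<and> dl 0 \<le> y" using assms dl_0 by simp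
  have bd: "\<forall>m. m \<le> j \<and> dl m \<le> y \<longrightarrow> m \<le> j" by simp
  have P: "sel j y \<le> j \<and> dl (sel j y) \<le> y" unfolding sel_def
    by (rule GreatestI_nat[of _ 0 j]) (use ex in auto)
  then show "sel j y \<le> j" "dl (sel j y) \<le> y" by auto
  show "y < dl (Suc (sel j y))"
  proof (cases "Suc (sel j y) \<le> j")
    case True
    have "\<not> (Suc (sel j y) \<le> j \<and> dl (Suc (sel j y)) \<le> y)"
    proof
      assume h: "Suc (sel j y) \<le> j \<and> dl (Suc (sel j y)) \<le> y"
      have "Suc (sel j y) \<le> sel j y" unfolding sel_def[of j y]
        by (rule Greatest_le_nat[of _ _ j]) (use h in \<open>auto simp: sel_def\<close>)
      then show False by simp
    qed
    then show ?thesis using True by simp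
  next
    case False
    then have "sel j y = j" using P by simp
    then show ?thesis using dl_Suc(1)[of j] assms by simp
  qed
qed

lemma sel_top: "0 \<le> y \<Longrightarrow> y < dl 1 \<Longrightarrow> y \<le> dl j \<Longrightarrow> sel j y = 0"
proof -
  assume a: "0 \<le> y" "y < dl 1" "y \<le> dl j"
  have "dl (sel j y) < dl 1" using sel_props(2)[OF a(1,3)] a(2) by simp
  then have "\<not> 1 \<le> sel j y" using dl_mono_le by force
  then show ?thesis by simp
qed

lemma sel_bot: "sel j (dl j) = j"
proof -
  have "j \<le> sel j (dl j)" unfolding sel_def by (rule Greatest_le_nat[of _ _ j]) auto
  moreover have "sel j (dl j) \<le> j" using sel_props(1)[of "dl j" j] dl_mono_le[of 0 j] dl_0 by simp
  ultimately show ?thesis by simp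
qed

lemma step_H:
  assumes "0 \<le> y" "2 * y \<le> dl j"
  shows "(Phi (Suc (sel j y)))^2 \<le> r^3 * Phi (sel j (2*y))"
        "Phi (Suc (sel j (2*y))) \<le> r^3 * (Phi (sel j y))^2"
proof -
  define n where "n = sel j y"
  define m where "m = sel j (2*y)"
  have y1: "y \<le> dl j" using assms by simp
  have n1: "dl n \<le> y" "y < dl (Suc n)" using sel_props(2,3)[OF assms(1) y1] by (simp_all add: n_def)
  have m1: "dl m \<le> 2*y" "2*y < dl (Suc m)" using sel_props(2,3)[of "2*y" j] assms by (simp_all add: m_def)
  have rp: "r > 0" using s_pos by (simp add: r_def)
  have pz0: "Phi k \<noteq> 0" for k using Phi_pos[of k] by simp
  have pz: "Phi m \<noteq> 0" "Phi n \<noteq> 0" "Phi (Suc n) \<noteq> 0" "Phi (Suc m) \<noteq> 0" "r \<noteq> 0"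
    using pz0 rp by auto
  have l1: "2 * dl (Suc n) \<le> dl m + 3 * ln r" using n1 m1 dl_Suc(2)[of n] dl_Suc(2)[of m] by linarith
  have l2: "dl (Suc m) \<le> 2 * dl n + 3 * ln r" using n1 m1 dl_Suc(2)[of n] dl_Suc(2)[of m] by linarith
  have "ln ((Phi (Suc n))^2) \<le> ln (r^3 * Phi m)"
    using l1 rp Phi_pos pz unfolding dl_def by (simp add: ln_mult ln_realpow)
  then show "(Phi (Suc (sel j y)))^2 \<le> r^3 * Phi (sel j (2*y))"
    unfolding n_def[symmetric] m_def[symmetric] using rp Phi_pos pz by (subst (asm) ln_le_cancel_iff) auto
  have "ln (Phi (Suc m)) \<le> ln (r^3 * (Phi n)^2)"
    using l2 rp Phi_pos pz unfolding dl_def by (simp add: ln_mult ln_realpow)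
  then show "Phi (Suc (sel j (2*y))) \<le> r^3 * (Phi (sel j y))^2"
    unfolding n_def[symmetric] m_def[symmetric] using rp Phi_pos pz by (subst (asm) ln_le_cancel_iff) auto
qed

lemma colPQ_bounds: "a < 2 \<Longrightarrow> \<bar>phi (colP n a) (colQ n a)\<bar> \<le> Phi (Suc n) \<and> \<bar>psi (colP n a) (colQ n a)\<bar> \<le> r / Phi n"
  using col_bounds[of n] by (auto simp: colP_def colQ_def)

lemma Bm_entries:
  assumes H1: "(Phi (Suc n))^2 \<le> r^3 * Phi m" and H2: "Phi (Suc m) \<le> r^3 * (Phi n)^2"
  shows "mnorm (Bm n m) \<le> 64 * D^3" "0 \<le> mnorm (Bm n m)"
proof -
  have b: "\<bar>Bm n m $$ (i,k)\<bar> \<le> 64 * D^3" if ik: "i < 2" "k < 4" for i k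
  proof -
    have a: "k div 2 < 2" "k mod 2 < 2" using ik by auto
    note u = colPQ_bounds[OF a(1), of n] and v = colPQ_bounds[OF a(2), of n]
    note eb = entry_bound[of "colP n (k div 2)" "colQ n (k div 2)" n "colP n (k mod 2)" "colQ n (k mod 2)" m,
        OF conjunct1[OF u] conjunct2[OF u] conjunct1[OF v] conjunct2[OF v] H1 H2]
    have "real_of_int \<bar>Bm n m $$ (i,k)\<bar> \<le> 64 * (real_of_int D)^3"
    proof (cases "i = 0")
      case True then show ?thesis using eb(1) by (simp add: Bm_idx[OF ik(2)] XB_idx[OF ik(2)] XB_idx1[OF ik(2)])
    next
      case False then have i1: "i = 1" using ik by simp
      have "Bm n m $$ (i,k) = - Q1 m * XB n $$ (0,k) + P1 m * XB n $$ (1,k)" using i1 Bm_idx(2)[OF ik(2)] by simp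
      then show ?thesis using eb(2) by (simp add: XB_idx[OF ik(2)] XB_idx1[OF ik(2)])
    qed
    then have "real_of_int \<bar>Bm n m $$ (i,k)\<bar> \<le> real_of_int (64 * D^3)" by simp
    then show ?thesis by (simp only: of_int_le_iff)
  qed
  show "mnorm (Bm n m) \<le> 64 * D^3" "0 \<le> mnorm (Bm n m)" using mnorm_le[OF Bm_carrier b] by auto
qed

lemma lgD: "lg (real_of_int D) \<ge> 2" "log 2 (real_of_int D) \<le> lg (real_of_int D)"
  using lg_ge2 lg_ge_log[of "real_of_int D"] Dpos by auto

lemma Bm_lg:
  assumes "mnorm (Bm n m) \<le> 64 * D^3" "0 \<le> mnorm (Bm n m)"
  shows "lg (real_of_int (mnorm (Bm n m))) \<le> 6 * lg (real_of_int D)"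
proof -
  have Dr: "real_of_int D \<ge> 1" using Dpos by simp
  have "(real_of_int D)^3 \<ge> 1" using Dr by (rule one_le_power)
  then have Y4: "64 * (real_of_int D)^3 \<ge> 4" by linarith
  have "real_of_int (mnorm (Bm n m)) \<le> real_of_int (64 * D^3)" using assms(1) by (simp only: of_int_le_iff)
  moreover have "\<bar>real_of_int (mnorm (Bm n m))\<bar> = real_of_int (mnorm (Bm n m))" using assms(2) by simp
  ultimately have "\<bar>real_of_int (mnorm (Bm n m))\<bar> \<le> 64 * (real_of_int D)^3" by simp
  then have "lg (real_of_int (mnorm (Bm n m))) \<le> log 2 (64 * (real_of_int D)^3)" using Y4 by (rule lg_le_log)
  also have "\<dots> = 6 + 3 * log 2 (real_of_int D)"
  proof -
    have "log 2 (64 * (real_of_int D)^3) = log 2 64 + log 2 ((real_of_int D)^3)" using Dr by (subst log_mult) auto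
    moreover have "log 2 (64::real) = 6"
      using log_powr_cancel[of 2 6] by simp
    moreover have "log 2 ((real_of_int D)^3) = 3 * log 2 (real_of_int D)" using Dr by (simp add: log_nat_power)
    ultimately show ?thesis by simp
  qed
  also have "\<dots> \<le> 6 * lg (real_of_int D)" using lgD by linarith
  finally show ?thesis .
qed

end

context DD begin

lemma ln2_bound: "ln (2::real) \<ge> 1/4"
proof -
  have a: "1/2 - (1/2)^2 \<le> ln (1 + (1/2::real))" by (rule ln_one_plus_pos_lower_bound) auto
  have b: "ln (1 + (1/2::real)) \<le> ln 2" by (subst ln_le_cancel_iff) auto
  have c: "1/2 - (1/2::real)^2 = 1/4" by (simp add: power2_eq_square)
  show ?thesis using a b c by linarith
qed

lemma main:
  assumes j1: "1 \<le> j" and jp: "j \<le> cyc_period D"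
  shows "\<exists>(K::nat) (Qs::nat \<Rightarrow> form) (Vs::nat \<Rightarrow> int mat).
        (\<forall>k\<le>K. reduced D (Qs k) \<and> Vs k \<in> carrier_mat 2 2) \<and>
        Qs 0 = Itilde D \<and> Vs 0 = 1\<^sub>m 2 \<and>
        (\<forall>k<K.
           (Qs (Suc k) = right_nb D (Qs k) \<and>
            fmat (Qs (Suc k)) = transpose_mat (rn_S D (Qs k)) * fmat (Qs k) * rn_S D (Qs k) \<and>
            Vs (Suc k) = Vs k * rn_S D (Qs k) \<and>
            lg (real_of_int (mnorm (rn_S D (Qs k)))) \<le> 1/2 * lg (real_of_int D))
           \<or>
           (\<exists>k1 k2 B. k1 \<le> k \<and> k2 \<le> k \<and>
              composition_via (Qs k1) (Qs k2) (Qs (Suc k)) B \<and>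
              Vs (Suc k) * B = B0 D * kron (Vs k1) (Vs k2) \<and>
              lg (real_of_int (mnorm B)) \<le> 6 * lg (real_of_int D))) \<and>
        Qs K = cyc D j \<and> Vs K = Lmat D j \<and>
        real K \<le> 6 * (lg (real_of_int D))^2"
proof -
  have Dr: "real_of_int D \<ge> 1" using Dpos by simp
  define e where "e = nat \<lceil>log 2 (real_of_int D)\<rceil>"
  define N where "N = 2 * e + 6"
  define ns where "ns t = sel j (dl j / 2^t)" for t :: nat
  have lD0: "log 2 (real_of_int D) \<ge> 0" using Dr by simp
  have e1: "real e \<ge> log 2 (real_of_int D)" unfolding e_def using lD0 by linarith
  have e2: "real e < log 2 (real_of_int D) + 1" unfolding e_def using lD0 by linarith
  have pe: "(2::real)^e \<ge> real_of_int D"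
  proof -
    have "real_of_int D = 2 powr (log 2 (real_of_int D))" using Dr by simp
    also have "\<dots> \<le> 2 powr (real e)" using e1 by (intro powr_mono) auto
    also have "\<dots> = 2^e" by (simp add: powr_realpow)
    finally show ?thesis .
  qed
  have pN: "(2::real)^N \<ge> 64 * (real_of_int D)^2"
  proof -
    have "(2::real)^N = 64 * ((2::real)^e)^2" by (simp add: N_def power_add power_mult_distrib power_mult[symmetric] mult.commute)
    moreover have "((2::real)^e)^2 \<ge> (real_of_int D)^2" using pe Dr by (intro power_mono) auto
    ultimately show ?thesis by simp
  qed
  have dlj0: "dl j \<ge> 0" using dl_mono_le[of 0 j] dl_0 by simp
  have jD: "real j \<le> 7 * real_of_int D"
  proof -
    have "j \<le> 7 * nat D" using jp period_bound by simp
    then have "real j \<le> real (7 * nat D)" by (simp only: of_nat_le_iff)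
    then show ?thesis using Dpos by simp
  qed
  have r2: "r \<ge> 2" using s_ge1 by (simp add: r_def)
  have rD: "r \<le> 2 * real_of_int D"
  proof -
    have "s * 1 \<le> s * s" using s_ge1 s_pos by (intro mult_left_mono) auto
    then show ?thesis using s_ss by (simp add: r_def)
  qed
  have dlj: "dl j \<le> 14 * (real_of_int D)^2"
  proof -
    have lr0: "ln r \<ge> 0" using r2 by simp
    have "ln r < r" using r2 by (intro ln_less_self) auto
    then have lr: "ln r \<le> 2 * real_of_int D" using rD by linarith
    have "dl j \<le> real j * ln r" by (rule dl_le)
    also have "\<dots> \<le> (7 * real_of_int D) * (2 * real_of_int D)" using jD lr lr0 Dr by (intro mult_mono) auto
    finally show ?thesis by (simp add: power2_eq_square)
  qed
  have nsN: "ns N = 0"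
  proof -
    have p: "(2::real)^N > 0" by simp
    have "dl j / 2^N \<le> 14 * (real_of_int D)^2 / (64 * (real_of_int D)^2)"
      using dlj pN dlj0 Dr by (intro frac_le) auto
    also have "\<dots> = 7/32" using Dr by simp
    also have "\<dots> < dl 1" using dl_1 ln2_bound by simp
    finally have lt: "dl j / 2^N < dl 1" .
    have "dl j * 1 \<le> dl j * 2^N" using dlj0 by (intro mult_left_mono) auto
    then have "dl j / 2^N \<le> dl j" by (simp add: divide_le_eq)
    then show ?thesis unfolding ns_def using sel_top[OF _ lt] dlj0 by simp
  qed
  have ns0: "ns 0 = j" unfolding ns_def using sel_bot by simp
  define Qs where "Qs k = cyc D (ns (N - k))" for k
  define Vs where "Vs k = Lmat D (ns (N - k))" for k
  have step: "\<exists>k1 k2 B. k1 \<le> k \<and> k2 \<le> k \<and>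
              composition_via (Qs k1) (Qs k2) (Qs (Suc k)) B \<and>
              Vs (Suc k) * B = B0 D * kron (Vs k1) (Vs k2) \<and>
              lg (real_of_int (mnorm B)) \<le> 6 * lg (real_of_int D)" if kN: "k < N" for k
  proof -
    define t where "t = N - Suc k"
    have tk: "N - k = Suc t" "N - Suc k = t" using kN by (auto simp: t_def)
    define y where "y = dl j / 2^(Suc t)"
    have y0: "0 \<le> y" using dlj0 by (simp add: y_def)
    have y2: "2 * y = dl j / 2^t" by (simp add: y_def)
    have "dl j * 1 \<le> dl j * 2^t" using dlj0 by (intro mult_left_mono) auto
    then have y2l: "2 * y \<le> dl j" unfolding y2 by (simp add: divide_le_eq)
    define n where "n = sel j y"
    define m where "m = sel j (2*y)"
    have nn: "ns (Suc t) = n" "ns t = m"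
      unfolding ns_def n_def m_def y2 by (simp_all only: y_def)
    note H = step_H[OF y0 y2l, folded n_def m_def]
    note BE = Bm_entries[OF H]
    have cv: "composition_via (cyc D n) (cyc D n) (cyc D m) (Bm n m)"
      unfolding composition_via_def using Bm_carrier comp_identity Bm_gcd Bm_orient by blast
    show ?thesis
      apply (rule exI[of _ k], rule exI[of _ k], rule exI[of _ "Bm n m"])
      using cv Bm_V[of m n] Bm_lg[OF BE] by (simp add: Qs_def Vs_def tk nn)
  qed
  have Kb: "real N \<le> 6 * (lg (real_of_int D))^2"
  proof -
    have "real N = 2 * real e + 6" by (simp add: N_def)
    also have "\<dots> \<le> 2 * log 2 (real_of_int D) + 8" using e2 by simp
    also have "\<dots> \<le> 6 * lg (real_of_int D)" using lgD by linarith
    also have "\<dots> \<le> 6 * (lg (real_of_int D))^2"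
    proof -
      have "lg (real_of_int D) * 1 \<le> lg (real_of_int D) * lg (real_of_int D)" using lgD by (intro mult_left_mono) auto
      then show ?thesis by (simp add: power2_eq_square)
    qed
    finally show ?thesis .
  qed
  show ?thesis
    apply (rule exI[of _ N], rule exI[of _ Qs], rule exI[of _ Vs])
    using cyc_reduced Lmat_carrier step Kb nsN ns0 by (simp add: Qs_def Vs_def cyc_0)
qed

end

theorem lemma6p4:
  "\<exists>C::real. \<forall>(D::int) (j::nat).
     0 < D \<longrightarrow> \<not> (\<exists>n::int. D = n^2) \<longrightarrow> 1 \<le> j \<longrightarrow> j \<le> cyc_period D \<longrightarrow>
     (\<exists>(K::nat) (Qs::nat \<Rightarrow> form) (Vs::nat \<Rightarrow> int mat).
        (\<forall>k\<le>K. reduced D (Qs k) \<and> Vs k \<in> carrier_mat 2 2) \<and>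
        Qs 0 = Itilde D \<and> Vs 0 = 1\<^sub>m 2 \<and>
        (\<forall>k<K.
           (Qs (Suc k) = right_nb D (Qs k) \<and>
            fmat (Qs (Suc k)) = transpose_mat (rn_S D (Qs k)) * fmat (Qs k) * rn_S D (Qs k) \<and>
            Vs (Suc k) = Vs k * rn_S D (Qs k) \<and>
            lg (real_of_int (mnorm (rn_S D (Qs k)))) \<le> 1/2 * lg (real_of_int D))
           \<or>
           (\<exists>k1 k2 B. k1 \<le> k \<and> k2 \<le> k \<and>
              composition_via (Qs k1) (Qs k2) (Qs (Suc k)) B \<and>
              Vs (Suc k) * B = B0 D * kron (Vs k1) (Vs k2) \<and>
              lg (real_of_int (mnorm B)) \<le> C * lg (real_of_int D))) \<and>
        Qs K = cyc D j \<and> Vs K = Lmat D j \<and>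
        real K \<le> C * (lg (real_of_int D))^2)"
proof (intro exI[of _ "6::real"] allI impI)
  fix D :: int and j :: nat
  assume "0 < D" "\<not> (\<exists>n::int. D = n^2)" "1 \<le> j" "j \<le> cyc_period D"
  then interpret DD D by unfold_locales
  show "\<exists>(K::nat) (Qs::nat \<Rightarrow> form) (Vs::nat \<Rightarrow> int mat).
        (\<forall>k\<le>K. reduced D (Qs k) \<and> Vs k \<in> carrier_mat 2 2) \<and>
        Qs 0 = Itilde D \<and> Vs 0 = 1\<^sub>m 2 \<and>
        (\<forall>k<K.
           (Qs (Suc k) = right_nb D (Qs k) \<and>
            fmat (Qs (Suc k)) = transpose_mat (rn_S D (Qs k)) * fmat (Qs k) * rn_S D (Qs k) \<and>
            Vs (Suc k) = Vs k * rn_S D (Qs k) \<and>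
            lg (real_of_int (mnorm (rn_S D (Qs k)))) \<le> 1/2 * lg (real_of_int D))
           \<or>
           (\<exists>k1 k2 B. k1 \<le> k \<and> k2 \<le> k \<and>
              composition_via (Qs k1) (Qs k2) (Qs (Suc k)) B \<and>
              Vs (Suc k) * B = B0 D * kron (Vs k1) (Vs k2) \<and>
              lg (real_of_int (mnorm B)) \<le> 6 * lg (real_of_int D))) \<and>
        Qs K = cyc D j \<and> Vs K = Lmat D j \<and>
        real K \<le> 6 * (lg (real_of_int D))^2"
    by (rule main) fact+
qed

end
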